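(* Let $0<\alpha<1$, $T>0$, $\gamma\ge1$, $N\ge2$, and consider the graded mesh $t_k=T(k/N)^{\gamma}$, $0\le k\le N$. Let the coefficients $a^{(n)}_{n-k}$, DCC kernels $p^{(n)}_{n-k}$ and consistency errors $R^n$ be as in the context for this mesh. Let $v\in C([0,T])\cap C^2((0,T])$ satisfy $|v''(t)|\le c_v(1+t^{\sigma-2})$ for $0<t\le T$, with constants $c_v>0$ and $\sigma\in(0,1)\cup(1,2)$. Then there is a constant $C>0$ depending only on $c_v,\sigma,T,\gamma,\alpha$ (and not on $N$ or $n$) such that for all $1\le n\le N$, $$\sum_{j=1}^n p^{(n)}_{n-j}|R^j|\le C\,N^{-\min\{\gamma\sigma,\;2-\alpha\}} .$$
   Context: For a mesh $0=t_0<t_1<\dots<t_N=T$ let $\tau_n=t_n-t_{n-1}$, $t_{-1/2}=t_0$, $t_{n-1/2}=t_{n-1}+\tau_n/2$ for $1\le n\le N$, $\tau_{1/2}=\tau_1/2$ and $\tau_{n-1/2}=(\tau_n+\tau_{n-1})/2$ for $n\ge 2$. Let $\omega_\gamma(t)=t^{\gamma-1}/\Gamma(\gamma)$ for $t>0$ (here the subscript is a generic parameter). For $1\le n\le N$ and $1\le k\le n$ define $$a^{(n)}_{n-k}=\frac{1}{\tau_{k-1/2}}\int_{t_{k-3/2}}^{t_{k-1/2}}\omega_{1-\alpha}(t_{n-1/2}-s)\,ds .$$ The discrete complementary convolution (DCC) kernels are defined by $p^{(n)}_0=1/a^{(n)}_0$ and $p^{(n)}_{n-k}=\frac{1}{a^{(k)}_0}\sum_{j=k+1}^n\big(a^{(j)}_{j-k-1}-a^{(j)}_{j-k}\big)p^{(n)}_{n-j}$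 for $1\le k\le n-1$; equivalently $\sum_{j=k}^n p^{(n)}_{n-j}a^{(j)}_{j-k}=1$ for all $1\le k\le n$. The Caputo derivative of order $\alpha$ is ${}^C_0D^\alpha_t v(t)=\int_0^t\omega_{1-\alpha}(t-s)v'(s)\,ds$, and $$R^n={}^C_0D^\alpha_t v(t_{n-1/2})-\sum_{k=1}^n a^{(n)}_{n-k}\big(v(t_{k-1/2})-v(t_{k-3/2})\big),\qquad 1\le n\le N.$$ (In the paper $\alpha=\beta-1$ with $1<\beta<2$, so $2-\alpha=3-\beta$.) *)

theory Defs
  imports "HOL-Analysis.Analysis"
begin

definition omega :: "real \<Rightarrow> real \<Rightarrow> real" where
  "omega g t = (if t > 0 then t powr (g - 1) / Gamma g else 0)"

text \<open>Mesh t :: nat \<Rightarrow> real with t 0 = 0 < t 1 < ... < t N = T.\<close>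
definition tau :: "(nat \<Rightarrow> real) \<Rightarrow> nat \<Rightarrow> real" where
  "tau t n = t n - t (n - 1)"

text \<open>thalf t n = t_{n-1/2}; thalf t 0 = t_{-1/2} = t_0.\<close>
definition thalf :: "(nat \<Rightarrow> real) \<Rightarrow> nat \<Rightarrow> real" where
  "thalf t n = (if n = 0 then t 0 else t (n - 1) + tau t n / 2)"

text \<open>tauhalf t n = tau_{n-1/2} (n \<ge> 1).\<close>
definition tauhalf :: "(nat \<Rightarrow> real) \<Rightarrow> nat \<Rightarrow> real" where
  "tauhalf t n = (if n \<le> 1 then tau t 1 / 2 else (tau t n + tau t (n - 1)) / 2)"

text \<open>acoef al t n k = a^{(n)}_{n-k}.\<close>
definition acoef :: "real \<Rightarrow> (nat \<Rightarrow> real) \<Rightarrow> nat \<Rightarrow> nat \<Rightarrow> real" where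
  "acoef al t n k = (1 / tauhalf t k) *
     integral {thalf t (k - 1) .. thalf t k} (\<lambda>s. omega (1 - al) (thalf t n - s))"

text \<open>pker al t n k = p^{(n)}_{n-k} (DCC kernels), defined by the recursion of the paper.\<close>
function pker :: "real \<Rightarrow> (nat \<Rightarrow> real) \<Rightarrow> nat \<Rightarrow> nat \<Rightarrow> real" where
  "pker al t n k =
     (if n \<le> k then 1 / acoef al t n n
      else (1 / acoef al t k k) *
        (\<Sum>j\<in>{k+1..n}. (acoef al t j (k + 1) - acoef al t j k) * pker al t n j))"
  by pat_completeness auto
termination
  by (relation "Wellfounded.measure (\<lambda>(al, t, n, k). n - k)") auto

definition caputo :: "real \<Rightarrow> (real \<Rightarrow> real) \<Rightarrow> real \<Rightarrow> real" where
  "caputo al v x = integral {0..x} (\<lambda>s. omega (1 - al) (x - s) * deriv v s)"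

definition Rerr :: "real \<Rightarrow> (nat \<Rightarrow> real) \<Rightarrow> (real \<Rightarrow> real) \<Rightarrow> nat \<Rightarrow> real" where
  "Rerr al t v n = caputo al v (thalf t n)
     - (\<Sum>k=1..n. acoef al t n k * (v (thalf t k) - v (thalf t (k - 1))))"

definition graded_mesh :: "real \<Rightarrow> real \<Rightarrow> nat \<Rightarrow> nat \<Rightarrow> real" where
  "graded_mesh T g N k = T * (real k / real N) powr g"

end

theory Submission
  imports Defs
begin


definition om2 :: "real \<Rightarrow> real \<Rightarrow> real" where
  "om2 al x = x powr (1 - al) / Gamma (2 - al)"

lemma Gamma_2m: "(al::real) < 1 \<Longrightarrow> Gamma (2 - al) = (1 - al) * Gamma (1 - al)"
proof -
  assume "al < 1"
  have "1 - al \<notin> \<int>\<^sub>\<le>\<^sub>0" using \<open>al < 1\<close> by (auto elim!: nonpos_Ints_cases)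
  then have "Gamma ((1 - al) + 1) = (1 - al) * Gamma (1 - al)" by (rule Gamma_plus1)
  then show ?thesis by (simp add: algebra_simps)
qed

lemma Gamma_1m_pos: "(al::real) < 1 \<Longrightarrow> Gamma (1 - al) > 0"
  by (intro Gamma_real_pos) simp

lemma Gamma_2m_pos: "(al::real) < 1 \<Longrightarrow> Gamma (2 - al) > 0"
  by (intro Gamma_real_pos) simp

lemma omega_pos: "al < 1 \<Longrightarrow> x > 0 \<Longrightarrow> omega (1 - al) x > 0"
  using Gamma_1m_pos[of al] by (simp add: omega_def)

lemma omega_nonneg: "al < 1 \<Longrightarrow> omega (1 - al) x \<ge> 0"
  using Gamma_1m_pos[of al] by (simp add: omega_def)

lemma omega_eq: "x > 0 \<Longrightarrow> omega (1 - al) x = x powr (- al) / Gamma (1 - al)"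
  by (simp add: omega_def)

lemma omega_mono: "0 < al \<Longrightarrow> al < 1 \<Longrightarrow> 0 < x \<Longrightarrow> x \<le> y \<Longrightarrow> omega (1 - al) y \<le> omega (1 - al) x"
  using Gamma_1m_pos[of al]
  by (auto simp: omega_def intro!: divide_right_mono powr_mono2')

lemma om2_deriv: "0 < al \<Longrightarrow> al < 1 \<Longrightarrow> x > 0 \<Longrightarrow> (om2 al has_real_derivative omega (1 - al) x) (at x)"
proof -
  assume a: "0 < al" "al < 1" "x > 0"
  have "((\<lambda>x. x powr (1 - al)) has_real_derivative (1 - al) * x powr (1 - al - 1)) (at x)"
    by (rule has_real_derivative_powr) (use a in auto)
  then have "((\<lambda>x. x powr (1 - al) / Gamma (2 - al)) has_real_derivative (1 - al) * x powr (1 - al - 1) / Gamma (2 - al)) (at x)"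
    by (rule DERIV_cdivide)
  moreover have "(1 - al) * x powr (1 - al - 1) / Gamma (2 - al) = omega (1 - al) x"
    using Gamma_2m[of al] Gamma_1m_pos[of al] a by (simp add: omega_def)
  ultimately show ?thesis unfolding om2_def by simp
qed

lemma om2_cont: "al < 1 \<Longrightarrow> continuous_on {0..} (om2 al)"
  unfolding om2_def
  by (intro continuous_on_divide continuous_on_const continuous_on_powr' continuous_on_id) (auto simp: Gamma_2m_pos[THEN less_imp_neq, symmetric])

lemma om2_0 [simp]: "om2 al 0 = 0" by (simp add: om2_def)

lemma omega_has_integral:
  assumes "0 < al" "al < 1" "a \<le> b" "b \<le> x"
  shows "((\<lambda>s. omega (1 - al) (x - s)) has_integral (om2 al (x - a) - om2 al (x - b))) {a..b}"
proof -
  have c: "continuous_on {a..b} (\<lambda>s. - om2 al (x - s))"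
    apply (rule continuous_intros)+
    apply (rule continuous_on_compose2[OF om2_cont[OF assms(2)]])
    using assms by (auto intro!: continuous_intros)
  have "((\<lambda>s. omega (1 - al) (x - s)) has_integral (- om2 al (x - b) - - om2 al (x - a))) {a..b}"
  proof (rule fundamental_theorem_of_calculus_interior[OF assms(3) c])
    fix s assume s: "s \<in> {a<..<b}"
    have "((\<lambda>s. - om2 al (x - s)) has_real_derivative (- (omega (1 - al) (x - s) * (0 - 1)))) (at s)"
      apply (rule DERIV_minus)
      apply (rule DERIV_chain2[OF om2_deriv])
      using s assms by (auto intro!: derivative_eq_intros)
    then show "((\<lambda>s. - om2 al (x - s)) has_vector_derivative omega (1 - al) (x - s)) (at s)"
      by (simp add: has_real_derivative_iff_has_vector_derivative)
  qed
  then show ?thesis by simp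
qed


definition Ph :: "real \<Rightarrow> real \<Rightarrow> real \<Rightarrow> real" where
  "Ph cv sg u = cv * (u^2 / 2 + u powr sg / (sg * (sg - 1)))"
definition Ph1 :: "real \<Rightarrow> real \<Rightarrow> real \<Rightarrow> real" where
  "Ph1 cv sg u = cv * (u + u powr (sg - 1) / (sg - 1))"
definition Ph2 :: "real \<Rightarrow> real \<Rightarrow> real \<Rightarrow> real" where
  "Ph2 cv sg u = cv * (1 + u powr (sg - 2))"

definition vgood :: "real \<Rightarrow> real \<Rightarrow> real \<Rightarrow> (real \<Rightarrow> real) \<Rightarrow> (real \<Rightarrow> real) \<Rightarrow> (real \<Rightarrow> real) \<Rightarrow> bool" where
  "vgood T cv sg v v' v'' \<longleftrightarrow> continuous_on {0..T} v
     \<and> (\<forall>t\<in>{0<..T}. (v has_real_derivative v' t) (at t within {0<..T})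
                    \<and> (v' has_real_derivative v'' t) (at t within {0<..T}))
     \<and> continuous_on {0<..T} v''
     \<and> (\<forall>t\<in>{0<..T}. \<bar>v'' t\<bar> \<le> cv * (1 + t powr (sg - 2)))"

lemma Ph_deriv: "sg \<noteq> 0 \<Longrightarrow> sg \<noteq> 1 \<Longrightarrow> u > 0 \<Longrightarrow> (Ph cv sg has_real_derivative Ph1 cv sg u) (at u)"
  unfolding Ph_def Ph1_def
  apply (rule derivative_eq_intros refl has_real_derivative_powr | simp)+
  done

lemma Ph1_deriv: "sg \<noteq> 1 \<Longrightarrow> u > 0 \<Longrightarrow> (Ph1 cv sg has_real_derivative Ph2 cv sg u) (at u)"
  unfolding Ph2_def Ph1_def
  apply (rule derivative_eq_intros refl has_real_derivative_powr | simp)+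
  done

lemma Ph_cont: "sg > 0 \<Longrightarrow> sg \<noteq> 1 \<Longrightarrow> continuous_on {0..} (Ph cv sg)"
proof -
  assume "sg > 0" "sg \<noteq> 1"
  have "continuous_on {0..} (\<lambda>u::real. u powr sg)"
    by (rule continuous_on_powr') (use \<open>sg > 0\<close> in \<open>auto intro: continuous_intros\<close>)
  then show ?thesis unfolding Ph_def
    by (intro continuous_on_mult continuous_on_add continuous_on_divide continuous_on_power continuous_on_const continuous_on_id) (use \<open>sg > 0\<close> \<open>sg \<noteq> 1\<close> in auto)
qed

lemma Ph2_pos: "cv > 0 \<Longrightarrow> Ph2 cv sg u > 0"
  unfolding Ph2_def by (simp add: add_pos_nonneg)

lemma Ph2_anti: "cv > 0 \<Longrightarrow> sg < 2 \<Longrightarrow> 0 < u \<Longrightarrow> u \<le> w \<Longrightarrow> Ph2 cv sg w \<le> Ph2 cv sg u"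
  unfolding Ph2_def by (auto intro!: mult_left_mono powr_mono2')

lemma Ph1_mvt:
  assumes "cv > 0" "sg < 2" "sg \<noteq> 1" "0 < m" "m \<le> s" "s \<le> b"
  shows "Ph1 cv sg b - Ph1 cv sg s \<le> Ph2 cv sg m * (b - s)"
proof (cases "s = b")
  case True then show ?thesis by simp
next
  case False
  then have "s < b" using assms by simp
  then obtain z where z: "s < z" "z < b" "Ph1 cv sg b - Ph1 cv sg s = (b - s) * Ph2 cv sg z"
    using MVT2[of s b "Ph1 cv sg" "Ph2 cv sg"] Ph1_deriv[of sg] assms by force
  have "Ph2 cv sg z \<le> Ph2 cv sg m" using Ph2_anti[of cv sg m z] assms z by simp
  then show ?thesis using z \<open>s < b\<close> by (simp add: mult.commute mult_left_mono)
qed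

lemma Ph1_mono: "cv > 0 \<Longrightarrow> sg \<noteq> 1 \<Longrightarrow> 0 < s \<Longrightarrow> s \<le> b \<Longrightarrow> Ph1 cv sg s \<le> Ph1 cv sg b"
  apply (rule DERIV_nonneg_imp_increasing_open[of s b])
    apply simp
   apply (rule exI, rule conjI, rule Ph1_deriv, simp, simp)
   apply (simp add: Ph2_pos less_imp_le)
  apply (rule DERIV_continuous_on[where D="Ph2 cv sg"])
  apply (rule has_field_derivative_at_within, rule Ph1_deriv) by auto

lemma vgood_deriv_at:
  assumes "vgood T cv sg v v' v''" "0 < u" "u < T"
  shows "(v has_real_derivative v' u) (at u)" "(v' has_real_derivative v'' u) (at u)"
proof -
  have o: "at u within {0<..<T} = at u" by (rule at_within_open) (use assms in auto)
  have sub: "{0<..<T} \<subseteq> {0<..T}" by auto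
  have d: "(v has_real_derivative v' u) (at u within {0<..T})" "(v' has_real_derivative v'' u) (at u within {0<..T})"
    using assms unfolding vgood_def by auto
  show "(v has_real_derivative v' u) (at u)"
    using has_field_derivative_subset[OF d(1) sub] o by auto
  show "(v' has_real_derivative v'' u) (at u)"
    using has_field_derivative_subset[OF d(2) sub] o by auto
qed

lemma vgood_v'_cont:
  assumes "vgood T cv sg v v' v''"
  shows "continuous_on {0<..T} v'"
  apply (rule DERIV_continuous_on[where D=v''])
  using assms unfolding vgood_def by auto

lemma vprime_diff:
  assumes "vgood T cv sg v v' v''" "cv > 0" "sg \<noteq> 1" "0 < s" "s \<le> b" "b < T"
  shows "\<bar>v' s - v' b\<bar> \<le> Ph1 cv sg b - Ph1 cv sg s"
proof -
  have cont: "continuous_on {s..b} v'"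
    using vgood_v'_cont[OF assms(1)] by (rule continuous_on_subset) (use assms in auto)
  have bd: "\<bar>v'' u\<bar> \<le> Ph2 cv sg u" if "0 < u" "u < T" for u
    using assms(1) that unfolding vgood_def Ph2_def by auto
  have "(\<lambda>u. v' u + Ph1 cv sg u) s \<le> (\<lambda>u. v' u + Ph1 cv sg u) b"
  proof (rule DERIV_nonneg_imp_increasing_open[OF assms(5)])
    fix u assume u: "s < u" "u < b"
    show "\<exists>y. ((\<lambda>u. v' u + Ph1 cv sg u) has_real_derivative y) (at u) \<and> 0 \<le> y"
      apply (rule exI[of _ "v'' u + Ph2 cv sg u"])
      using vgood_deriv_at(2)[OF assms(1), of u] Ph1_deriv[OF assms(3), of u] bd[of u] u assms
      by (auto intro!: DERIV_add)
  next
    show "continuous_on {s..b} (\<lambda>u. v' u + Ph1 cv sg u)"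
      apply (intro continuous_on_add cont)
      apply (rule DERIV_continuous_on[where D="Ph2 cv sg"])
      apply (rule has_field_derivative_at_within, rule Ph1_deriv) using assms by auto
  qed
  moreover have "(\<lambda>u. Ph1 cv sg u - v' u) s \<le> (\<lambda>u. Ph1 cv sg u - v' u) b"
  proof (rule DERIV_nonneg_imp_increasing_open[OF assms(5)])
    fix u assume u: "s < u" "u < b"
    show "\<exists>y. ((\<lambda>u. Ph1 cv sg u - v' u) has_real_derivative y) (at u) \<and> 0 \<le> y"
      apply (rule exI[of _ "Ph2 cv sg u - v'' u"])
      using vgood_deriv_at(2)[OF assms(1), of u] Ph1_deriv[OF assms(3), of u] bd[of u] u assms
      by (auto intro!: DERIV_diff)
  next
    show "continuous_on {s..b} (\<lambda>u. Ph1 cv sg u - v' u)"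
      apply (intro continuous_on_diff cont)
      apply (rule DERIV_continuous_on[where D="Ph2 cv sg"])
      apply (rule has_field_derivative_at_within, rule Ph1_deriv) using assms by auto
  qed
  ultimately show ?thesis by simp
qed


lemma integrable_Ioo_iff: "(f::real\<Rightarrow>real) integrable_on {a<..<b} \<longleftrightarrow> f integrable_on {a..b}"
  using integrable_on_open_interval[of f a b] by simp

lemma integral_Ioo_eq: "integral {a<..<b} (f::real\<Rightarrow>real) = integral {a..b} f"
  using integral_open_interval[of a b f] by simp

lemma integrable_Ioo_bound:
  fixes f g :: "real \<Rightarrow> real"
  assumes "continuous_on {a<..<b} f" "g integrable_on {a..b}" "\<And>x. x \<in> {a<..<b} \<Longrightarrow> \<bar>f x\<bar> \<le> g x"
  shows "f integrable_on {a..b}"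
proof -
  have g': "g integrable_on {a<..<b}"
    using assms(2) by (simp add: integrable_Ioo_iff)
  have L: "{a<..<b} \<in> sets lebesgue"
    by (metis borel_open open_greaterThanLessThan sets_completionI_sets sets_lborel)
  have "f integrable_on {a<..<b}"
    by (rule measurable_bounded_by_integrable_imp_integrable_real[OF continuous_imp_measurable_on_sets_lebesgue[OF assms(1) L] g' assms(3) L])
  then show ?thesis by (simp add: integrable_Ioo_iff)
qed

lemma integral_le_Ioo:
  fixes f g :: "real \<Rightarrow> real"
  assumes "f integrable_on {a..b}" "g integrable_on {a..b}" "\<And>x. x \<in> {a<..<b} \<Longrightarrow> f x \<le> g x"
  shows "integral {a..b} f \<le> integral {a..b} g"
proof -
  have f': "f integrable_on {a<..<b}" "g integrable_on {a<..<b}"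
    using assms(1,2) by (simp_all add: integrable_Ioo_iff)
  have "integral {a<..<b} f \<le> integral {a<..<b} g"
    by (rule integral_le[OF f']) (rule assms(3))
  then show ?thesis by (simp add: integral_Ioo_eq)
qed

lemma integral_abs_le_Ioo:
  fixes f g :: "real \<Rightarrow> real"
  assumes "f integrable_on {a..b}" "g integrable_on {a..b}" "\<And>x. x \<in> {a<..<b} \<Longrightarrow> \<bar>f x\<bar> \<le> g x"
  shows "\<bar>integral {a..b} f\<bar> \<le> integral {a..b} g"
proof -
  have f': "f integrable_on {a<..<b}" "g integrable_on {a<..<b}"
    using assms(1,2) by (simp_all add: integrable_Ioo_iff)
  have "norm (integral {a<..<b} f) \<le> integral {a<..<b} g"
    by (rule integral_norm_bound_integral[OF f']) (simp add: assms(3))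
  then show ?thesis by (simp add: integral_Ioo_eq)
qed


lemma K_cont:
  assumes "b \<le> x" "al < 1"
  shows "continuous_on {a<..<b} (\<lambda>s. omega (1 - al) (x - s))"
proof -
  have "continuous_on {a<..<b} (\<lambda>s. (x - s) powr (- al) / Gamma (1 - al))"
    by (intro continuous_intros) (use assms Gamma_1m_pos[of al] in force)+
  then show ?thesis
    by (rule continuous_on_cong[THEN iffD1, rotated 2]) (use assms in \<open>auto simp: omega_def\<close>)
qed

lemma K_mono:
  assumes "0 < al" "al < 1" "s \<le> s'" "s' < x"
  shows "omega (1 - al) (x - s) \<le> omega (1 - al) (x - s')"
  using omega_mono[of al "x - s'" "x - s"] assms by simp

lemma core:
  assumes al: "0 < al" "al < 1" and sg: "0 < sg" "sg < 2" "sg \<noteq> 1" and cv: "cv > 0"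
    and vg: "vgood T cv sg v v' v''"
    and ab: "0 \<le> a" "a < b" "b \<le> x" "x < T"
  defines "K \<equiv> \<lambda>s. omega (1 - al) (x - s)"
    and "m \<equiv> a + (b - a) / 2"
    and "J \<equiv> (b - a) * Ph1 cv sg b - Ph cv sg b + Ph cv sg a"
    and "IK \<equiv> om2 al (x - a) - om2 al (x - b)"
  shows "(\<lambda>s. K s * v' s) integrable_on {a..b}"
    and "\<bar>integral {a..b} (\<lambda>s. K s * v' s) - (v b - v a) / (b - a) * IK\<bar>
           \<le> K m * J + Ph2 cv sg m * (b - a) * IK + J / (b - a) * IK"
    and "J \<ge> 0"
    and "b < x \<Longrightarrow> \<bar>integral {a..b} (\<lambda>s. K s * v' s) - (v b - v a) / (b - a) * IK\<bar>
           \<le> 2 * (K b - K a) * J"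
proof -
  have Kint: "(K has_integral IK) {a..b}"
    unfolding K_def IK_def by (rule omega_has_integral) (use al ab in auto)
  have IKnn: "IK \<ge> 0"
    using has_integral_nonneg[OF Kint] omega_nonneg[OF al(2)] unfolding K_def by auto
  have vcont: "continuous_on {a..b} v"
  proof -
    have "continuous_on {0..T} v" using vg unfolding vgood_def by auto
    then show ?thesis by (rule continuous_on_subset) (use ab in auto)
  qed
  have vint: "(v' has_integral (v b - v a)) {a..b}"
  proof (rule fundamental_theorem_of_calculus_interior)
    show "a \<le> b" using ab by simp
    show "continuous_on {a..b} v" by (rule vcont)
    fix s assume "s \<in> {a<..<b}"
    then show "(v has_vector_derivative v' s) (at s)"
      using vgood_deriv_at(1)[OF vg, of s] ab by (simp add: has_real_derivative_iff_has_vector_derivative)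
  qed
  define W where "W = (v b - v a) / (b - a) - v' b"
  define w where "w s = v' s - v' b" for s
  have wint: "(w has_integral ((b - a) * W)) {a..b}"
  proof -
    have "((\<lambda>s. v' s - v' b) has_integral ((v b - v a) - (b - a) * v' b)) {a..b}"
      by (rule has_integral_diff[OF vint]) (use has_integral_const_real[of "v' b" a b] ab in simp)
    moreover have "(v b - v a) - (b - a) * v' b = (b - a) * W" using ab by (simp add: W_def field_simps)
    ultimately show ?thesis unfolding w_def by simp
  qed
  have Phint: "(Ph1 cv sg has_integral (Ph cv sg b - Ph cv sg a)) {a..b}"
  proof (rule fundamental_theorem_of_calculus_interior)
    show "a \<le> b" using ab by simp
    show "continuous_on {a..b} (Ph cv sg)"
      by (rule continuous_on_subset[OF Ph_cont]) (use sg ab in auto)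
    fix s assume "s \<in> {a<..<b}"
    then show "(Ph cv sg has_vector_derivative Ph1 cv sg s) (at s)"
      using Ph_deriv[of sg s cv] sg ab by (simp add: has_real_derivative_iff_has_vector_derivative)
  qed
  have Pint: "((\<lambda>s. Ph1 cv sg b - Ph1 cv sg s) has_integral J) {a..b}"
  proof -
    have "((\<lambda>s. Ph1 cv sg b - Ph1 cv sg s) has_integral ((b - a) * Ph1 cv sg b - (Ph cv sg b - Ph cv sg a))) {a..b}"
      by (rule has_integral_diff[OF _ Phint]) (use has_integral_const_real[of "Ph1 cv sg b" a b] ab in simp)
    then show ?thesis unfolding J_def by (simp add: algebra_simps)
  qed
  have wbd: "\<bar>w s\<bar> \<le> Ph1 cv sg b - Ph1 cv sg s" if "s \<in> {a<..<b}" for s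
    unfolding w_def by (rule vprime_diff[OF vg cv sg(3)]) (use that ab in auto)
  have Jnn: "J \<ge> 0"
  proof -
    have "0 \<le> integral {a..b} (\<lambda>s. Ph1 cv sg b - Ph1 cv sg s)"
    proof -
      have "integral {a..b} (\<lambda>s. 0) \<le> integral {a..b} (\<lambda>s. Ph1 cv sg b - Ph1 cv sg s)"
        by (rule integral_le_Ioo) (use Pint wbd in \<open>auto intro: order_trans[OF abs_ge_zero] simp del: greaterThanLessThan_iff\<close>, use wbd in \<open>force intro: order_trans[OF abs_ge_zero]\<close>)
      then show ?thesis by simp
    qed
    then show ?thesis using Pint by (simp add: integral_unique)
  qed
  show "J \<ge> 0" by (rule Jnn)
  have Wbd: "\<bar>W\<bar> * (b - a) \<le> J"
  proof -
    have "\<bar>integral {a..b} w\<bar> \<le> integral {a..b} (\<lambda>s. Ph1 cv sg b - Ph1 cv sg s)"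
      by (rule integral_abs_le_Ioo) (use wint Pint wbd in auto)
    then show ?thesis using wint Pint ab by (simp add: integral_unique abs_mult mult.commute)
  qed
  have mpos: "0 < m" "a < m" "m < b" using ab unfolding m_def by (auto simp: field_simps)
  have Knn: "K s \<ge> 0" for s unfolding K_def by (rule omega_nonneg[OF al(2)])
  have Kmono: "K s \<le> K s'" if "s \<le> s'" "s' < x" for s s'
    unfolding K_def by (rule K_mono) (use al that in auto)
  define g where "g s = K m * (Ph1 cv sg b - Ph1 cv sg s) + Ph2 cv sg m * (b - a) * K s" for s
  have gint: "(g has_integral (K m * J + Ph2 cv sg m * (b - a) * IK)) {a..b}"
    unfolding g_def by (intro has_integral_add has_integral_mult_right Pint Kint)
  have Kwbd: "\<bar>K s * w s\<bar> \<le> g s" if s: "s \<in> {a<..<b}" for s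
  proof -
    have P0: "0 \<le> Ph1 cv sg b - Ph1 cv sg s" using wbd[OF s] by linarith
    have T2: "0 \<le> Ph2 cv sg m * (b - a) * K s" using Ph2_pos[OF cv, of sg m] ab Knn[of s] by simp
    show ?thesis
    proof (cases "s \<le> m")
      case True
      have "\<bar>K s * w s\<bar> = K s * \<bar>w s\<bar>" using Knn[of s] by (simp add: abs_mult)
      also have "\<dots> \<le> K m * (Ph1 cv sg b - Ph1 cv sg s)"
        by (rule mult_mono) (use wbd[OF s] Kmono[of s m] True mpos ab Knn[of m] in auto)
      finally show ?thesis unfolding g_def using T2 by linarith
    next
      case False
      have "\<bar>w s\<bar> \<le> Ph2 cv sg m * (b - s)"
        using wbd[OF s] Ph1_mvt[OF cv sg(2,3) mpos(1), of s b] False s by auto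
      also have "\<dots> \<le> Ph2 cv sg m * (b - a)"
        using Ph2_pos[OF cv, of sg m] s by (auto intro!: mult_left_mono)
      finally have "\<bar>K s * w s\<bar> \<le> K s * (Ph2 cv sg m * (b - a))"
        using Knn[of s] by (simp add: abs_mult mult_left_mono)
      moreover have "0 \<le> K m * (Ph1 cv sg b - Ph1 cv sg s)" using Knn[of m] P0 by simp
      ultimately show ?thesis unfolding g_def by (simp add: algebra_simps)
    qed
  qed
  have v'cont: "continuous_on {a<..<b} v'"
    by (rule continuous_on_subset[OF vgood_v'_cont[OF vg]]) (use ab in auto)
  have Kwint: "(\<lambda>s. K s * w s) integrable_on {a..b}"
  proof (rule integrable_Ioo_bound[OF _ _ Kwbd])
    show "continuous_on {a<..<b} (\<lambda>s. K s * w s)"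
      unfolding w_def K_def by (intro continuous_intros K_cont v'cont) (use ab al in auto)
    show "g integrable_on {a..b}" using gint by blast
  qed
  have eqfun: "(\<lambda>s. K s * v' s) = (\<lambda>s. K s * w s + v' b * K s)"
    unfolding w_def by (auto simp: algebra_simps)
  have KvI: "((\<lambda>s. K s * v' s) has_integral (integral {a..b} (\<lambda>s. K s * w s) + v' b * IK)) {a..b}"
    unfolding eqfun by (intro has_integral_add has_integral_mult_right Kint integrable_integral Kwint)
  show "(\<lambda>s. K s * v' s) integrable_on {a..b}" using KvI by blast
  have main_eq: "integral {a..b} (\<lambda>s. K s * v' s) - (v b - v a) / (b - a) * IK
        = integral {a..b} (\<lambda>s. K s * w s) - W * IK"
    using KvI unfolding W_def by (simp add: integral_unique algebra_simps)
  have IKw: "\<bar>integral {a..b} (\<lambda>s. K s * w s)\<bar> \<le> K m * J + Ph2 cv sg m * (b - a) * IK"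
    using integral_abs_le_Ioo[OF Kwint _ Kwbd] gint by (auto simp: integral_unique)
  have WIK: "\<bar>W * IK\<bar> \<le> J / (b - a) * IK"
  proof -
    have "\<bar>W\<bar> \<le> J / (b - a)" using Wbd ab by (simp add: field_simps)
    then have "\<bar>W\<bar> * IK \<le> J / (b - a) * IK" using IKnn by (rule mult_right_mono)
    then show ?thesis using IKnn by (simp add: abs_mult)
  qed
  show "\<bar>integral {a..b} (\<lambda>s. K s * v' s) - (v b - v a) / (b - a) * IK\<bar>
           \<le> K m * J + Ph2 cv sg m * (b - a) * IK + J / (b - a) * IK"
    unfolding main_eq using IKw WIK by linarith
  assume bx: "b < x"
  define f where "f s = (K s - K a) * (w s - W)" for s
  have fI: "(f has_integral (integral {a..b} (\<lambda>s. K s * w s) - W * IK)) {a..b}"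
  proof -
    have fe: "f = (\<lambda>s. (K s * w s - W * K s) - (K a * w s - K a * W))"
      unfolding f_def by (auto simp: algebra_simps)
    have "(f has_integral ((integral {a..b} (\<lambda>s. K s * w s) - W * IK) - (K a * ((b - a) * W) - (b - a) * (K a * W)))) {a..b}"
      unfolding fe
      by (intro has_integral_diff has_integral_mult_right integrable_integral Kwint Kint wint)
         (use has_integral_const_real[of "K a * W" a b] ab in simp)
    then show ?thesis by (simp add: algebra_simps)
  qed
  define G where "G s = (K b - K a) * ((Ph1 cv sg b - Ph1 cv sg s) + \<bar>W\<bar>)" for s
  have GI: "(G has_integral ((K b - K a) * (J + (b - a) * \<bar>W\<bar>))) {a..b}"
    unfolding G_def
    by (intro has_integral_mult_right has_integral_add Pint) (use has_integral_const_real[of "\<bar>W\<bar>" a b] ab in simp)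
  have fG: "\<bar>f s\<bar> \<le> G s" if s: "s \<in> {a<..<b}" for s
  proof -
    have k1: "0 \<le> K s - K a" "K s - K a \<le> K b - K a"
      using Kmono[of a s] Kmono[of s b] s bx by auto
    have "\<bar>w s - W\<bar> \<le> (Ph1 cv sg b - Ph1 cv sg s) + \<bar>W\<bar>" using wbd[OF s] by linarith
    then have "\<bar>f s\<bar> \<le> (K s - K a) * ((Ph1 cv sg b - Ph1 cv sg s) + \<bar>W\<bar>)"
      unfolding f_def using k1 by (simp add: abs_mult mult_left_mono)
    also have "\<dots> \<le> G s" unfolding G_def
      by (rule mult_right_mono) (use k1 wbd[OF s] in auto)
    finally show ?thesis .
  qed
  have "\<bar>integral {a..b} f\<bar> \<le> integral {a..b} G"
    by (rule integral_abs_le_Ioo[OF _ _ fG]) (use fI GI in auto)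
  then have "\<bar>integral {a..b} (\<lambda>s. K s * w s) - W * IK\<bar> \<le> (K b - K a) * (J + (b - a) * \<bar>W\<bar>)"
    using fI GI by (simp add: integral_unique)
  also have "\<dots> \<le> (K b - K a) * (2 * J)"
    by (rule mult_left_mono) (use Wbd Kmono[of a b] bx ab in \<open>auto simp: mult.commute\<close>)
  finally show "\<bar>integral {a..b} (\<lambda>s. K s * v' s) - (v b - v a) / (b - a) * IK\<bar> \<le> 2 * (K b - K a) * J"
    unfolding main_eq by (simp add: algebra_simps)
qed


definition meshok :: "(nat \<Rightarrow> real) \<Rightarrow> nat \<Rightarrow> bool" where
  "meshok t N \<longleftrightarrow> t 0 = 0 \<and> (\<forall>i<N. t i < t (Suc i))"

lemma thalf_0: "thalf t 0 = t 0" by (simp add: thalf_def)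

lemma thalf_Suc: "thalf t (Suc k) = (t k + t (Suc k)) / 2"
  by (simp add: thalf_def tau_def field_simps)

lemma tauhalf_eq:
  assumes "meshok t N" "1 \<le> k"
  shows "tauhalf t k = thalf t k - thalf t (k - 1)"
proof (cases "k = 1")
  case True then show ?thesis using assms by (simp add: tauhalf_def thalf_def tau_def meshok_def)
next
  case False
  then have "k \<ge> 2" using assms by simp
  then have "k = Suc (Suc (k - 2))" by simp
  then obtain j where "k = Suc (Suc j)" by blast
  then show ?thesis by (simp add: tauhalf_def thalf_def tau_def field_simps)
qed

lemma thalf_step:
  assumes "meshok t N" "k < N"
  shows "thalf t k < thalf t (Suc k)"
proof (cases k)
  case 0
  have "t 0 < t (Suc 0)" using assms 0 unfolding meshok_def by auto
  then show ?thesis using 0 by (simp add: thalf_Suc thalf_0)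
next
  case (Suc j)
  have "t j < t (Suc j)" "t (Suc j) < t (Suc (Suc j))" using assms Suc unfolding meshok_def by auto
  then show ?thesis using Suc by (simp add: thalf_Suc)
qed

lemma thalf_strict:
  assumes "meshok t N" "i < j" "j \<le> N"
  shows "thalf t i < thalf t j"
  using assms(2,3)
proof (induction j)
  case 0 then show ?case by simp
next
  case (Suc j)
  have st: "thalf t j < thalf t (Suc j)" by (rule thalf_step[OF assms(1)]) (use Suc in simp)
  show ?case
  proof (cases "i = j")
    case True then show ?thesis using st by simp
  next
    case False then show ?thesis using Suc st by auto
  qed
qed

lemma thalf_mono:
  assumes "meshok t N" "i \<le> j" "j \<le> N"
  shows "thalf t i \<le> thalf t j"
  using thalf_strict[OF assms(1), of i j] assms by (cases "i = j") auto

lemma thalf_nonneg: "meshok t N \<Longrightarrow> k \<le> N \<Longrightarrow> thalf t k \<ge> 0"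
  using thalf_mono[of t N 0 k] by (simp add: thalf_0 meshok_def)

lemma t_strict:
  assumes "meshok t N" "i < j" "j \<le> N"
  shows "t i < t j"
  using assms(2,3)
proof (induction j)
  case 0 then show ?case by simp
next
  case (Suc j)
  have st: "t j < t (Suc j)" using assms(1) Suc unfolding meshok_def by simp
  show ?case
  proof (cases "i = j")
    case True then show ?thesis using st by simp
  next
    case False then show ?thesis using Suc st by auto
  qed
qed

lemma thalf_lt_tN:
  assumes "meshok t N" "k \<le> N" "N \<ge> 1"
  shows "thalf t k < t N"
proof -
  obtain M where M: "N = Suc M" using assms by (cases N) auto
  have "thalf t N < t N" using t_strict[OF assms(1), of M N] M by (simp add: thalf_Suc)
  then show ?thesis using thalf_mono[OF assms(1) assms(2)] by (meson le_refl order.strict_trans1)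
qed

lemma acoef_eq:
  assumes "0 < al" "al < 1" "meshok t N" "1 \<le> k" "k \<le> n" "n \<le> N"
  shows "acoef al t n k = (om2 al (thalf t n - thalf t (k - 1)) - om2 al (thalf t n - thalf t k)) / (thalf t k - thalf t (k - 1))"
proof -
  have "((\<lambda>s. omega (1 - al) (thalf t n - s)) has_integral (om2 al (thalf t n - thalf t (k - 1)) - om2 al (thalf t n - thalf t k))) {thalf t (k - 1)..thalf t k}"
    by (rule omega_has_integral[OF assms(1,2) thalf_mono[OF assms(3)] thalf_mono[OF assms(3)]]) (use assms in auto)
  then show ?thesis unfolding acoef_def using tauhalf_eq[OF assms(3,4)] by (simp add: integral_unique)
qed

lemma acoef_mvt:
  assumes "0 < al" "al < 1" "meshok t N" "1 \<le> k" "k \<le> n" "n \<le> N"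
  shows "\<exists>z. thalf t n - thalf t k < z \<and> z < thalf t n - thalf t (k - 1) \<and> acoef al t n k = omega (1 - al) z"
proof -
  define lo where "lo = thalf t n - thalf t k"
  define hi where "hi = thalf t n - thalf t (k - 1)"
  have lt: "thalf t (k - 1) < thalf t k" by (rule thalf_strict[OF assms(3)]) (use assms in auto)
  have kn: "thalf t k \<le> thalf t n" by (rule thalf_mono[OF assms(3) assms(5,6)])
  have lohi: "lo < hi" "0 \<le> lo" unfolding lo_def hi_def using lt kn by linarith+
  have c: "continuous_on {lo..hi} (om2 al)" by (rule continuous_on_subset[OF om2_cont[OF assms(2)]]) (use lohi in auto)
  have "\<And>x. lo < x \<Longrightarrow> x < hi \<Longrightarrow> om2 al differentiable at x"
  proof -
    fix x assume "lo < x" "x < hi"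
    then have "x > 0" using lohi by linarith
    then show "om2 al differentiable at x" using om2_deriv[OF assms(1,2)] real_differentiable_def by blast
  qed
  then obtain l z where z: "lo < z" "z < hi" "(om2 al has_real_derivative l) (at z)" "om2 al hi - om2 al lo = (hi - lo) * l"
    using MVT[OF lohi(1) c] by blast
  have "z > 0" using z lohi by linarith
  then have "l = omega (1 - al) z" using DERIV_unique[OF z(3) om2_deriv[OF assms(1,2)]] by blast
  moreover have "acoef al t n k = (om2 al hi - om2 al lo) / (hi - lo)"
    unfolding acoef_eq[OF assms] lo_def hi_def by simp
  ultimately have "acoef al t n k = omega (1 - al) z"
    using z(4) lohi(1) by simp
  then show ?thesis using z(1,2) unfolding lo_def hi_def by blast
qed


context
  fixes al :: real and t :: "nat \<Rightarrow> real" and N :: nat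
  assumes al: "0 < al" "al < 1" and mesh: "meshok t N"
begin

lemma acoef_pos: "1 \<le> k \<Longrightarrow> k \<le> n \<Longrightarrow> n \<le> N \<Longrightarrow> acoef al t n k > 0"
proof -
  assume a: "1 \<le> k" "k \<le> n" "n \<le> N"
  obtain z where z: "thalf t n - thalf t k < z" "acoef al t n k = omega (1 - al) z"
    using acoef_mvt[OF al mesh a] by blast
  have "thalf t k \<le> thalf t n" by (rule thalf_mono[OF mesh a(2,3)])
  then have "z > 0" using z by linarith
  then show ?thesis using z omega_pos[OF al(2)] by simp
qed

lemma acoef_le_K: "1 \<le> k \<Longrightarrow> k < n \<Longrightarrow> n \<le> N \<Longrightarrow> acoef al t n k \<le> omega (1 - al) (thalf t n - thalf t k)"
proof -
  assume a: "1 \<le> k" "k < n" "n \<le> N"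
  obtain z where z: "thalf t n - thalf t k < z" "acoef al t n k = omega (1 - al) z"
    using acoef_mvt[OF al mesh, of k n] a by auto
  have "thalf t k < thalf t n" by (rule thalf_strict[OF mesh a(2,3)])
  then show ?thesis using z omega_mono[OF al, of "thalf t n - thalf t k" z] by simp
qed

lemma K_le_acoef: "k < n \<Longrightarrow> n \<le> N \<Longrightarrow> omega (1 - al) (thalf t n - thalf t k) \<le> acoef al t n (Suc k)"
proof -
  assume a: "k < n" "n \<le> N"
  obtain z where z: "thalf t n - thalf t (Suc k) < z" "z < thalf t n - thalf t k" "acoef al t n (Suc k) = omega (1 - al) z"
    using acoef_mvt[OF al mesh, of "Suc k" n] a by auto
  have "thalf t (Suc k) \<le> thalf t n" by (rule thalf_mono[OF mesh]) (use a in auto)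
  then have "z > 0" using z by linarith
  then show ?thesis using z omega_mono[OF al, of z "thalf t n - thalf t k"] by simp
qed

lemma acoef_mono: "1 \<le> k \<Longrightarrow> k < n \<Longrightarrow> n \<le> N \<Longrightarrow> acoef al t n k \<le> acoef al t n (Suc k)"
  using acoef_le_K K_le_acoef by (meson less_imp_le_nat order_trans)

lemma acoef1_ge: "1 \<le> n \<Longrightarrow> n \<le> N \<Longrightarrow> omega (1 - al) (thalf t n) \<le> acoef al t n 1"
  using K_le_acoef[of 0 n] mesh by (simp add: thalf_0 meshok_def)

lemma acoef_nn: "1 \<le> n \<Longrightarrow> n \<le> N \<Longrightarrow> acoef al t n n = (thalf t n - thalf t (n - 1)) powr (- al) / Gamma (2 - al)"
proof -
  assume a: "1 \<le> n" "n \<le> N"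
  define h where "h = thalf t n - thalf t (n - 1)"
  have h: "h > 0" unfolding h_def using thalf_strict[OF mesh, of "n - 1" n] a by simp
  have "acoef al t n n = om2 al h / h" unfolding acoef_eq[OF al mesh a(1) le_refl a(2)] h_def by simp
  also have "\<dots> = h powr (- al) / Gamma (2 - al)"
    using h by (simp add: om2_def powr_diff powr_minus divide_simps)
  finally show ?thesis unfolding h_def .
qed

lemma pker_nn: "pker al t n n = 1 / acoef al t n n" by simp

lemma pker_lt: "k < n \<Longrightarrow> pker al t n k = (1 / acoef al t k k) * (\<Sum>j\<in>{k+1..n}. (acoef al t j (k + 1) - acoef al t j k) * pker al t n j)"
  by simp

lemma pker_id: "1 \<le> k \<Longrightarrow> k \<le> n \<Longrightarrow> n \<le> N \<Longrightarrow> (\<Sum>j=k..n. pker al t n j * acoef al t j k) = 1"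
proof (induction "n - k" arbitrary: k)
  case 0
  then have "k = n" by simp
  then show ?case using acoef_pos[of n n] 0 by simp
next
  case (Suc d)
  then have kn: "k < n" by simp
  have IH: "(\<Sum>j=Suc k..n. pker al t n j * acoef al t j (Suc k)) = 1"
    using Suc.hyps(1)[of "Suc k"] Suc.hyps(2) Suc.prems kn by simp
  have akk: "acoef al t k k > 0" using acoef_pos[of k k] Suc.prems kn by simp
  have "(\<Sum>j=k..n. pker al t n j * acoef al t j k) = pker al t n k * acoef al t k k + (\<Sum>j=Suc k..n. pker al t n j * acoef al t j k)"
    using kn by (simp add: sum.atLeast_Suc_atMost)
  also have "pker al t n k * acoef al t k k = (\<Sum>j=Suc k..n. (acoef al t j (k + 1) - acoef al t j k) * pker al t n j)"
    using pker_lt[OF kn] akk by simp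
  finally have "(\<Sum>j=k..n. pker al t n j * acoef al t j k) = (\<Sum>j=Suc k..n. pker al t n j * acoef al t j (Suc k))"
    by (simp add: sum.distrib[symmetric] algebra_simps)
  then show ?case using IH by simp
qed

lemma pker_nonneg: "1 \<le> k \<Longrightarrow> k \<le> n \<Longrightarrow> n \<le> N \<Longrightarrow> pker al t n k \<ge> 0"
proof (induction "n - k" arbitrary: k rule: less_induct)
  case less
  show ?case
  proof (cases "k = n")
    case True then show ?thesis using acoef_pos[of n n] less.prems by simp
  next
    case False
    then have kn: "k < n" using less.prems by simp
    have akk: "acoef al t k k > 0" using acoef_pos[of k k] less.prems kn by simp
    have "(\<Sum>j\<in>{k+1..n}. (acoef al t j (k + 1) - acoef al t j k) * pker al t n j) \<ge> 0"
    proof (rule sum_nonneg)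
      fix j assume j: "j \<in> {k+1..n}"
      have "pker al t n j \<ge> 0" by (rule less.hyps) (use j less.prems in auto)
      moreover have "acoef al t j k \<le> acoef al t j (k + 1)"
        using acoef_mono[of k j] j less.prems by auto
      ultimately show "(acoef al t j (k + 1) - acoef al t j k) * pker al t n j \<ge> 0" by simp
    qed
    then show ?thesis using pker_lt[OF kn] akk by simp
  qed
qed

lemma pker_omega_sum: "1 \<le> n \<Longrightarrow> n \<le> N \<Longrightarrow> (\<Sum>j=1..n. pker al t n j * omega (1 - al) (thalf t j)) \<le> 1"
proof -
  assume a: "1 \<le> n" "n \<le> N"
  have "(\<Sum>j=1..n. pker al t n j * omega (1 - al) (thalf t j)) \<le> (\<Sum>j=1..n. pker al t n j * acoef al t j 1)"
  proof (rule sum_mono)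
    fix j assume j: "j \<in> {1..n}"
    have "omega (1 - al) (thalf t j) \<le> acoef al t j 1" using acoef1_ge[of j] j a by auto
    moreover have "pker al t n j \<ge> 0" using pker_nonneg[of j n] j a by auto
    ultimately show "pker al t n j * omega (1 - al) (thalf t j) \<le> pker al t n j * acoef al t j 1"
      by (rule mult_left_mono)
  qed
  also have "\<dots> = 1" using pker_id[of 1 n] a by simp
  finally show ?thesis .
qed

end


lemma swap1: "(\<Sum>j=1..(n::nat). \<Sum>k=1..j-1. f j k) = (\<Sum>k=1..n. \<Sum>j=Suc k..n. (f j k :: real))"
proof (induction n)
  case 0 then show ?case by simp
next
  case (Suc n)
  have "(\<Sum>k=1..Suc n. \<Sum>j=Suc k..Suc n. f j k) = (\<Sum>k=1..n. \<Sum>j=Suc k..Suc n. f j k)"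
    by (simp add: sum.cl_ivl_Suc)
  also have "\<dots> = (\<Sum>k=1..n. (\<Sum>j=Suc k..n. f j k) + f (Suc n) k)"
    by (rule sum.cong) (auto simp: sum.cl_ivl_Suc)
  also have "\<dots> = (\<Sum>k=1..n. \<Sum>j=Suc k..n. f j k) + (\<Sum>k=1..n. f (Suc n) k)"
    by (simp add: sum.distrib)
  finally show ?case using Suc by (simp add: sum.cl_ivl_Suc)
qed

lemma sum_shift_down: "(\<Sum>k=1..(n::nat). g (k - 1)) = (\<Sum>k=0..<n. (g k :: real))"
proof (induction n)
  case 0 then show ?case by simp
next
  case (Suc n) then show ?case by (simp add: sum.cl_ivl_Suc)
qed

lemma combine:
  fixes p w Q R :: "nat \<Rightarrow> real" and a :: "nat \<Rightarrow> nat \<Rightarrow> real" and n :: nat and B :: real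
  assumes n1: "1 \<le> n"
    and pnn: "\<And>j. 1 \<le> j \<Longrightarrow> j \<le> n \<Longrightarrow> p j \<ge> 0"
    and pid: "\<And>k. 1 \<le> k \<Longrightarrow> k \<le> n \<Longrightarrow> (\<Sum>j=k..n. p j * a j k) = 1"
    and amono: "\<And>j k. 1 \<le> k \<Longrightarrow> k < j \<Longrightarrow> j \<le> n \<Longrightarrow> a j k \<le> a j (Suc k)"
    and Qnn: "\<And>k. 1 \<le> k \<Longrightarrow> k \<le> n \<Longrightarrow> Q k \<ge> 0"
    and Rb: "\<And>j. 1 \<le> j \<Longrightarrow> j \<le> n \<Longrightarrow> \<bar>R j\<bar> \<le> (\<Sum>k=1..j-1. 2 * (a j (Suc k) - (if 2 \<le> k then a j (k - 1) else 0)) * Q k) + 3 * a j j * Q j"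
    and B1: "Q 1 \<le> B"
    and B2: "\<And>k. 1 \<le> k \<Longrightarrow> k \<le> n \<Longrightarrow> a k k * Q k \<le> B * w k"
    and B3: "\<And>k. 2 \<le> k \<Longrightarrow> k \<le> n \<Longrightarrow> a (k - 1) (k - 1) * Q k \<le> B * w (k - 1)"
    and wnn: "\<And>k. w k \<ge> 0"
    and wsum: "(\<Sum>j=1..n. p j * w j) \<le> 1"
  shows "(\<Sum>j=1..n. p j * \<bar>R j\<bar>) \<le> 9 * B"
proof -
  define c where "c j k = 2 * (a j (Suc k) - (if 2 \<le> k then a j (k - 1) else 0)) * Q k" for j k
  define psi where "psi k = (if k = 0 then 1 else if k \<le> n then p k * w k else 0)" for k
  have B0: "B \<ge> 0" using B1 Qnn[of 1] n1 by linarith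
  have psinn: "psi k \<ge> 0" for k
    using pnn[of k] wnn[of k] by (auto simp: psi_def)
  have S1: "(\<Sum>j=1..n. p j * \<bar>R j\<bar>) \<le> (\<Sum>j=1..n. p j * (\<Sum>k=1..j-1. c j k) + 3 * (p j * (a j j * Q j)))"
  proof (rule sum_mono)
    fix j assume j: "j \<in> {1..n}"
    have "p j * \<bar>R j\<bar> \<le> p j * ((\<Sum>k=1..j-1. c j k) + 3 * a j j * Q j)"
      by (rule mult_left_mono) (use Rb[of j] pnn[of j] j in \<open>auto simp: c_def\<close>)
    then show "p j * \<bar>R j\<bar> \<le> p j * (\<Sum>k=1..j-1. c j k) + 3 * (p j * (a j j * Q j))"
      by (simp add: algebra_simps)
  qed
  have S2: "(\<Sum>j=1..n. p j * (\<Sum>k=1..j-1. c j k)) = (\<Sum>k=1..n. \<Sum>j=Suc k..n. p j * c j k)"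
    unfolding sum_distrib_left by (rule swap1)
  have T: "(\<Sum>j=Suc k..n. p j * c j k) \<le> 2 * B * (psi (k - 1) + psi k)" if k: "k \<in> {1..n}" for k
  proof (cases "k = n")
    case True
    then show ?thesis using psinn[of "k - 1"] psinn[of k] B0 by simp
  next
    case False
    then have kn: "k < n" using k by simp
    have e1: "(\<Sum>j=Suc k..n. p j * c j k) = 2 * Q k * ((\<Sum>j=Suc k..n. p j * a j (Suc k)) - (\<Sum>j=Suc k..n. p j * (if 2 \<le> k then a j (k - 1) else 0)))"
      by (simp add: c_def sum_distrib_left sum_subtractf[symmetric] algebra_simps)
    have id1: "(\<Sum>j=Suc k..n. p j * a j (Suc k)) = 1" using pid[of "Suc k"] kn by simp
    show ?thesis
    proof (cases "2 \<le> k")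
      case False
      then have "k = 1" using k by simp
      have "B \<le> B * (1 + psi 1)" using psinn[of 1] B0 by (simp add: algebra_simps)
      then show ?thesis using e1 id1 B1 \<open>k = 1\<close> by (simp add: psi_def[of 0])
    next
      case True
      have "(\<Sum>j=k-1..n. p j * a j (k - 1)) = p (k - 1) * a (k - 1) (k - 1) + p k * a k (k - 1) + (\<Sum>j=Suc k..n. p j * a j (k - 1))"
      proof -
        have "(\<Sum>j=k-1..n. p j * a j (k - 1)) = p (k - 1) * a (k - 1) (k - 1) + (\<Sum>j=k..n. p j * a j (k - 1))"
          using True kn by (subst sum.atLeast_Suc_atMost) auto
        also have "(\<Sum>j=k..n. p j * a j (k - 1)) = p k * a k (k - 1) + (\<Sum>j=Suc k..n. p j * a j (k - 1))"
          using kn by (subst sum.atLeast_Suc_atMost) auto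
        finally show ?thesis by simp
      qed
      moreover have "(\<Sum>j=k-1..n. p j * a j (k - 1)) = 1" using pid[of "k - 1"] True kn by simp
      ultimately have id2: "(\<Sum>j=Suc k..n. p j * a j (k - 1)) = 1 - p (k - 1) * a (k - 1) (k - 1) - p k * a k (k - 1)"
        by simp
      have e2: "(\<Sum>j=Suc k..n. p j * c j k) = 2 * (p (k - 1) * (a (k - 1) (k - 1) * Q k) + p k * (a k (k - 1) * Q k))"
      proof -
        have "(\<Sum>j=Suc k..n. p j * (if 2 \<le> k then a j (k - 1) else 0)) = (\<Sum>j=Suc k..n. p j * a j (k - 1))"
          using True by simp
        then have "(\<Sum>j=Suc k..n. p j * c j k) = 2 * Q k * (1 - (1 - p (k - 1) * a (k - 1) (k - 1) - p k * a k (k - 1)))"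
          using e1 id1 id2 by simp
        then show ?thesis by (simp add: algebra_simps)
      qed
      have am: "a k (k - 1) \<le> a k k" using amono[of "k - 1" k] True kn by simp
      have "p k * (a k (k - 1) * Q k) \<le> p k * (a k k * Q k)"
        by (rule mult_left_mono) (use am Qnn[of k] pnn[of k] True kn in \<open>auto intro: mult_right_mono\<close>)
      also have "\<dots> \<le> p k * (B * w k)"
        by (rule mult_left_mono) (use B2[of k] pnn[of k] True kn in auto)
      finally have t1: "p k * (a k (k - 1) * Q k) \<le> B * psi k" using True kn by (simp add: psi_def algebra_simps)
      have "p (k - 1) * (a (k - 1) (k - 1) * Q k) \<le> p (k - 1) * (B * w (k - 1))"
        by (rule mult_left_mono) (use B3[of k] pnn[of "k - 1"] True kn in auto)
      moreover have "psi (k - 1) = p (k - 1) * w (k - 1)" using True kn by (simp add: psi_def)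
      ultimately have t2: "p (k - 1) * (a (k - 1) (k - 1) * Q k) \<le> B * psi (k - 1)" by (simp add: algebra_simps)
      show ?thesis using e2 t1 t2 by (simp add: algebra_simps)
    qed
  qed
  have psum: "(\<Sum>k=1..n. psi k) \<le> 1"
  proof -
    have "(\<Sum>k=1..n. psi k) = (\<Sum>k=1..n. p k * w k)" by (rule sum.cong) (auto simp: psi_def)
    then show ?thesis using wsum by simp
  qed
  have psum2: "(\<Sum>k=1..n. psi (k - 1)) \<le> 2"
  proof -
    have "(\<Sum>k=1..n. psi (k - 1)) = (\<Sum>k=0..<n. psi k)" by (rule sum_shift_down)
    also have "\<dots> \<le> (\<Sum>k=0..n. psi k)" by (rule sum_mono2) (use psinn in auto)
    also have "\<dots> = psi 0 + (\<Sum>k=1..n. psi k)" by (simp add: sum.atLeast_Suc_atMost)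
    finally show ?thesis using psum by (simp add: psi_def)
  qed
  have S3: "(\<Sum>k=1..n. \<Sum>j=Suc k..n. p j * c j k) \<le> 6 * B"
  proof -
    have "(\<Sum>k=1..n. \<Sum>j=Suc k..n. p j * c j k) \<le> (\<Sum>k=1..n. 2 * B * (psi (k - 1) + psi k))"
      by (rule sum_mono) (rule T)
    also have "\<dots> = 2 * B * ((\<Sum>k=1..n. psi (k - 1)) + (\<Sum>k=1..n. psi k))"
      by (simp only: sum_distrib_left[symmetric] sum.distrib)
    also have "\<dots> \<le> 2 * B * 3"
      by (rule mult_left_mono) (use psum psum2 B0 in auto)
    finally show ?thesis by simp
  qed
  have S4: "(\<Sum>j=1..n. p j * (a j j * Q j)) \<le> B"
  proof -
    have "(\<Sum>j=1..n. p j * (a j j * Q j)) \<le> (\<Sum>j=1..n. p j * (B * w j))"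
      by (rule sum_mono, rule mult_left_mono) (use B2 pnn in auto)
    also have "\<dots> = B * (\<Sum>j=1..n. p j * w j)" by (simp add: sum_distrib_left algebra_simps)
    also have "\<dots> \<le> B * 1" by (rule mult_left_mono) (use wsum B0 in auto)
    finally show ?thesis by simp
  qed
  have "(\<Sum>j=1..n. p j * (\<Sum>k=1..j-1. c j k) + 3 * (p j * (a j j * Q j)))
        = (\<Sum>j=1..n. p j * (\<Sum>k=1..j-1. c j k)) + 3 * (\<Sum>j=1..n. p j * (a j j * Q j))"
    by (simp add: sum.distrib sum_distrib_left)
  then show ?thesis using S1 S2 S3 S4 by linarith
qed


definition hh :: "(nat \<Rightarrow> real) \<Rightarrow> nat \<Rightarrow> real" where
  "hh t k = thalf t k - thalf t (k - 1)"
definition Jq :: "real \<Rightarrow> real \<Rightarrow> (nat \<Rightarrow> real) \<Rightarrow> nat \<Rightarrow> real" where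
  "Jq cv sg t k = hh t k * Ph1 cv sg (thalf t k) - Ph cv sg (thalf t k) + Ph cv sg (thalf t (k - 1))"
definition Qq :: "real \<Rightarrow> real \<Rightarrow> (nat \<Rightarrow> real) \<Rightarrow> nat \<Rightarrow> real" where
  "Qq cv sg t k = Jq cv sg t k + Ph2 cv sg (thalf t (k - 1) + hh t k / 2) * (hh t k)^2"

lemma omega_half_le:
  assumes "0 < al" "al < 1" "h > 0"
  shows "omega (1 - al) (h / 2) \<le> 2 * (h powr (- al) / Gamma (2 - al))"
proof -
  have g: "Gamma (2 - al) = (1 - al) * Gamma (1 - al)" "Gamma (1 - al) > 0" using Gamma_2m Gamma_1m_pos assms by auto
  have "omega (1 - al) (h / 2) = 2 powr al * h powr (- al) / Gamma (1 - al)"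
    using assms by (simp add: omega_def powr_divide powr_minus divide_simps)
  also have "2 powr al \<le> 2" using powr_mono[of al 1 2] assms by simp
  then have "2 powr al * h powr (- al) / Gamma (1 - al) \<le> 2 * h powr (- al) / Gamma (1 - al)"
    using g by (intro divide_right_mono mult_right_mono) auto
  also have "\<dots> \<le> 2 * (h powr (- al) / Gamma (1 - al)) / (1 - al)"
    using assms g by (simp add: divide_simps)
  also have "\<dots> = 2 * (h powr (- al) / Gamma (2 - al))" using g by simp
  finally show ?thesis .
qed

context
  fixes al T cv sg :: real and t :: "nat \<Rightarrow> real" and N :: nat and v v' v'' :: "real \<Rightarrow> real"
  assumes al: "0 < al" "al < 1" and mesh: "meshok t N" and N1: "N \<ge> 1" and tN: "t N \<le> T"
    and sg: "0 < sg" "sg < 2" "sg \<noteq> 1" and cv: "cv > 0"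
    and vg: "vgood T cv sg v v' v''"
begin

lemma s_lt_T: "k \<le> N \<Longrightarrow> thalf t k < T"
  using thalf_lt_tN[OF mesh _ N1] tN by force

lemma hh_pos: "1 \<le> k \<Longrightarrow> k \<le> N \<Longrightarrow> hh t k > 0"
  unfolding hh_def using thalf_strict[OF mesh, of "k - 1" k] by simp

lemma Jq_nn: "1 \<le> k \<Longrightarrow> k \<le> N \<Longrightarrow> Jq cv sg t k \<ge> 0"
proof -
  assume k: "1 \<le> k" "k \<le> N"
  have "thalf t (k - 1) < thalf t k" using thalf_strict[OF mesh, of "k - 1" k] k by simp
  then show ?thesis
    using core(3)[OF al sg cv vg thalf_nonneg[OF mesh, of "k - 1"] _ order_refl s_lt_T[OF k(2)]] k
    unfolding Jq_def hh_def by simp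
qed

lemma Qq_ge: "1 \<le> k \<Longrightarrow> k \<le> N \<Longrightarrow> Jq cv sg t k \<le> Qq cv sg t k"
  unfolding Qq_def using Ph2_pos[OF cv, of sg "thalf t (k - 1) + hh t k / 2"]
  by (simp add: less_imp_le)

lemma Qq_nn: "1 \<le> k \<Longrightarrow> k \<le> N \<Longrightarrow> Qq cv sg t k \<ge> 0"
  using Jq_nn Qq_ge by (meson order_trans)

end


context
  fixes al T cv sg :: real and t :: "nat \<Rightarrow> real" and N :: nat and v v' v'' :: "real \<Rightarrow> real"
  assumes al: "0 < al" "al < 1" and mesh: "meshok t N" and N1: "N \<ge> 1" and tN: "t N \<le> T"
    and sg: "0 < sg" "sg < 2" "sg \<noteq> 1" and cv: "cv > 0"
    and vg: "vgood T cv sg v v' v''"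
begin

lemma s_lt_T': "k \<le> N \<Longrightarrow> thalf t k < T"
  using thalf_lt_tN[OF mesh _ N1] tN by force

lemma caputo_split:
  assumes n: "1 \<le> n" "n \<le> N"
  shows "caputo al v (thalf t n) = (\<Sum>k=1..n. integral {thalf t (k - 1)..thalf t k} (\<lambda>s. omega (1 - al) (thalf t n - s) * v' s))"
proof -
  define x where "x = thalf t n"
  define F where "F s = omega (1 - al) (x - s) * v' s" for s
  have xT: "x < T" unfolding x_def using s_lt_T' n by simp
  have Fint: "F integrable_on {thalf t (k - 1)..thalf t k}" if k: "1 \<le> k" "k \<le> n" for k
  proof -
    have "thalf t (k - 1) < thalf t k" using thalf_strict[OF mesh, of "k - 1" k] k n by simp
    moreover have "thalf t k \<le> x" unfolding x_def by (rule thalf_mono[OF mesh]) (use k n in auto)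
    ultimately show ?thesis
      using core(1)[OF al sg cv vg thalf_nonneg[OF mesh, of "k - 1"] _ _ xT] k n unfolding F_def by simp
  qed
  have ind: "(F has_integral (\<Sum>k=1..m. integral {thalf t (k - 1)..thalf t k} F)) {0..thalf t m}" if "m \<le> n" for m
    using that
  proof (induction m)
    case 0
    have "thalf t 0 = 0" using mesh by (simp add: thalf_0 meshok_def)
    then show ?case using has_integral_refl(1)[of F 0] by simp
  next
    case (Suc m)
    have le: "0 \<le> thalf t m" "thalf t m \<le> thalf t (Suc m)"
      using thalf_nonneg[OF mesh, of m] thalf_mono[OF mesh, of m "Suc m"] Suc n by auto
    have "(F has_integral (integral {thalf t (Suc m - 1)..thalf t (Suc m)} F)) {thalf t m..thalf t (Suc m)}"
      using Fint[of "Suc m"] Suc by (simp add: integrable_integral)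
    from has_integral_combine[OF le Suc.IH[OF Suc_leD[OF Suc.prems]] this]
    show ?case by (simp add: add.commute)
  qed
  have main: "(F has_integral (\<Sum>k=1..n. integral {thalf t (k - 1)..thalf t k} F)) {0..x}"
    using ind[of n] unfolding x_def by simp
  have "((\<lambda>s. omega (1 - al) (x - s) * deriv v s) has_integral (\<Sum>k=1..n. integral {thalf t (k - 1)..thalf t k} F)) {0..x}"
  proof (rule has_integral_spike_finite[OF _ _ main, of "{0}"])
    fix s assume s: "s \<in> {0..x} - {0}"
    then have "0 < s" "s < T" using xT by auto
    then have "deriv v s = v' s" using vgood_deriv_at(1)[OF vg] DERIV_imp_deriv by blast
    then show "omega (1 - al) (x - s) * deriv v s = F s" unfolding F_def by simp
  qed simp
  then show ?thesis unfolding caputo_def x_def F_def by (simp add: integral_unique)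
qed

lemma Rerr_bound:
  assumes n: "1 \<le> n" "n \<le> N"
  shows "\<bar>Rerr al t v n\<bar> \<le> (\<Sum>k=1..n-1. 2 * (acoef al t n (Suc k) - (if 2 \<le> k then acoef al t n (k - 1) else 0)) * Qq cv sg t k) + 3 * acoef al t n n * Qq cv sg t n"
proof -
  define x where "x = thalf t n"
  define K where "K s = omega (1 - al) (x - s)" for s
  define tm where "tm k = integral {thalf t (k - 1)..thalf t k} (\<lambda>s. K s * v' s) - acoef al t n k * (v (thalf t k) - v (thalf t (k - 1)))" for k
  have xT: "x < T" unfolding x_def using s_lt_T' n by simp
  have R: "Rerr al t v n = (\<Sum>k=1..n. tm k)"
    unfolding Rerr_def caputo_split[OF n] tm_def K_def x_def by (simp add: sum_subtractf)
  have ab: "0 \<le> thalf t (k - 1)" "thalf t (k - 1) < thalf t k" "thalf t k \<le> x" if "1 \<le> k" "k \<le> n" for k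
    using thalf_nonneg[OF mesh, of "k - 1"] thalf_strict[OF mesh, of "k - 1" k] thalf_mono[OF mesh, of k n] that n
    unfolding x_def by auto
  have aform: "acoef al t n k * (v (thalf t k) - v (thalf t (k - 1)))
      = (v (thalf t k) - v (thalf t (k - 1))) / (thalf t k - thalf t (k - 1)) * (om2 al (x - thalf t (k - 1)) - om2 al (x - thalf t k))"
    if "1 \<le> k" "k \<le> n" for k
    unfolding acoef_eq[OF al mesh that(1,2) n(2)] x_def by simp
  have tk: "\<bar>tm k\<bar> \<le> 2 * (acoef al t n (Suc k) - (if 2 \<le> k then acoef al t n (k - 1) else 0)) * Qq cv sg t k"
    if k: "1 \<le> k" "k < n" for k
  proof -
    have bx: "thalf t k < x" unfolding x_def using thalf_strict[OF mesh k(2) n(2)] .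
    have c: "\<bar>tm k\<bar> \<le> 2 * (K (thalf t k) - K (thalf t (k - 1))) * Jq cv sg t k"
      using core(4)[OF al sg cv vg ab[of k] xT bx] aform[of k] k
      unfolding tm_def K_def Jq_def hh_def by simp
    have Kb: "K (thalf t k) \<le> acoef al t n (Suc k)" unfolding K_def x_def by (rule K_le_acoef[OF al mesh k(2) n(2)])
    have Ka: "(if 2 \<le> k then acoef al t n (k - 1) else 0) \<le> K (thalf t (k - 1))"
    proof (cases "2 \<le> k")
      case True
      then show ?thesis using acoef_le_K[OF al mesh, of "k - 1" n] k n unfolding K_def x_def by simp
    next
      case False then show ?thesis using omega_nonneg[OF al(2)] unfolding K_def by simp
    qed
    have Kmon: "K (thalf t (k - 1)) \<le> K (thalf t k)"
      unfolding K_def by (rule K_mono[OF al]) (use ab[of k] k bx in auto)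
    have J: "0 \<le> Jq cv sg t k" "Jq cv sg t k \<le> Qq cv sg t k"
      using Jq_nn[OF al mesh N1 tN sg cv vg, of k] Qq_ge[OF al mesh N1 tN sg cv vg, of k] k n by auto
    have "2 * (K (thalf t k) - K (thalf t (k - 1))) * Jq cv sg t k
        \<le> 2 * (acoef al t n (Suc k) - (if 2 \<le> k then acoef al t n (k - 1) else 0)) * Jq cv sg t k"
      by (intro mult_right_mono) (use Kb Ka J in auto)
    also have "\<dots> \<le> 2 * (acoef al t n (Suc k) - (if 2 \<le> k then acoef al t n (k - 1) else 0)) * Qq cv sg t k"
      by (intro mult_left_mono) (use Kb Ka Kmon J in auto)
    finally show ?thesis using c by linarith
  qed
  have tn: "\<bar>tm n\<bar> \<le> 3 * acoef al t n n * Qq cv sg t n"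
  proof -
    define a where "a = thalf t (n - 1)"
    define h where "h = hh t n"
    define A where "A = acoef al t n n"
    have hpos: "h > 0" "x - a = h" using ab[of n] n unfolding h_def hh_def a_def x_def by auto
    have Aeq: "A = h powr (- al) / Gamma (2 - al)"
      unfolding A_def h_def hh_def using acoef_nn[OF al mesh n] by simp
    have IK: "om2 al (x - a) - om2 al (x - x) = h * A"
      using acoef_eq[OF al mesh n(1) order_refl n(2)] hpos unfolding A_def a_def x_def by simp
    have m: "x - (a + (x - a) / 2) = h / 2" using hpos by simp
    have abx: "0 \<le> a" "a < x" "x \<le> x" using ab[of n] n unfolding a_def by auto
    have c0: "\<bar>integral {a..x} (\<lambda>s. omega (1 - al) (x - s) * v' s) - (v x - v a) / (x - a) * (om2 al (x - a) - om2 al (x - x))\<bar>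
           \<le> omega (1 - al) (x - (a + (x - a) / 2)) * ((x - a) * Ph1 cv sg x - Ph cv sg x + Ph cv sg a)
             + Ph2 cv sg (a + (x - a) / 2) * (x - a) * (om2 al (x - a) - om2 al (x - x))
             + ((x - a) * Ph1 cv sg x - Ph cv sg x + Ph cv sg a) / (x - a) * (om2 al (x - a) - om2 al (x - x))"
      by (rule core(2)[OF al sg cv vg abx xT])
    have tmn: "tm n = integral {a..x} (\<lambda>s. omega (1 - al) (x - s) * v' s) - (v x - v a) / (x - a) * (om2 al (x - a) - om2 al (x - x))"
      unfolding tm_def K_def a_def using aform[of n] n by (simp add: x_def)
    have Jn: "Jq cv sg t n = (x - a) * Ph1 cv sg x - Ph cv sg x + Ph cv sg a"
      unfolding Jq_def hh_def x_def a_def by simp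
    have c: "\<bar>tm n\<bar> \<le> omega (1 - al) (h / 2) * Jq cv sg t n + Ph2 cv sg (a + h / 2) * h * (h * A) + Jq cv sg t n / h * (h * A)"
    proof -
      have IK': "om2 al h - om2 al (x - x) = h * A" using IK hpos(2) by simp
      have m': "x - (a + h / 2) = h / 2" using hpos(2) by simp
      have Jn': "Jq cv sg t n = h * Ph1 cv sg x - Ph cv sg x + Ph cv sg a" using Jn hpos(2) by simp
      show ?thesis using c0 unfolding tmn hpos(2) IK' m' Jn'[symmetric] .
    qed
    have om: "omega (1 - al) (h / 2) \<le> 2 * A" using omega_half_le[OF al hpos(1)] Aeq by simp
    have J: "0 \<le> Jq cv sg t n" using Jq_nn[OF al mesh N1 tN sg cv vg, of n] n by auto
    have Apos: "A > 0" unfolding A_def using acoef_pos[OF al mesh, of n n] n by simp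
    have "omega (1 - al) (h / 2) * Jq cv sg t n \<le> 2 * A * Jq cv sg t n" by (rule mult_right_mono[OF om J])
    moreover have "Jq cv sg t n / h * (h * A) = A * Jq cv sg t n" using hpos by simp
    moreover have "Ph2 cv sg (a + h / 2) * h * (h * A) = A * (Ph2 cv sg (a + h / 2) * h^2)" by (simp add: power2_eq_square)
    moreover have "0 \<le> A * (Ph2 cv sg (a + h / 2) * h^2)" using Apos Ph2_pos[OF cv] by (simp add: less_imp_le)
    ultimately have "\<bar>tm n\<bar> \<le> 3 * A * Jq cv sg t n + A * (Ph2 cv sg (a + h / 2) * h^2)"
      using c by linarith
    moreover have "A * (Ph2 cv sg (a + h / 2) * h^2) \<le> 3 * (A * (Ph2 cv sg (a + h / 2) * h^2))"
      using \<open>0 \<le> A * (Ph2 cv sg (a + h / 2) * h^2)\<close> by linarith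
    ultimately have "\<bar>tm n\<bar> \<le> 3 * A * (Jq cv sg t n + Ph2 cv sg (a + h / 2) * h^2)"
      by (simp add: algebra_simps)
    then show ?thesis unfolding Qq_def A_def a_def h_def .
  qed
  have "\<bar>Rerr al t v n\<bar> \<le> (\<Sum>k=1..n. \<bar>tm k\<bar>)" unfolding R by (rule sum_abs)
  also have "\<dots> = (\<Sum>k=1..n-1. \<bar>tm k\<bar>) + \<bar>tm n\<bar>"
    using n by (cases n) (auto simp: sum.cl_ivl_Suc)
  also have "\<dots> \<le> (\<Sum>k=1..n-1. 2 * (acoef al t n (Suc k) - (if 2 \<le> k then acoef al t n (k - 1) else 0)) * Qq cv sg t k) + 3 * acoef al t n n * Qq cv sg t n"
  proof (intro add_mono sum_mono tn)
    fix k assume "k \<in> {1..n-1}"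
    then show "\<bar>tm k\<bar> \<le> 2 * (acoef al t n (Suc k) - (if 2 \<le> k then acoef al t n (k - 1) else 0)) * Qq cv sg t k"
      using tk[of k] by auto
  qed
  finally show ?thesis .
qed

end


lemma general_bound:
  fixes al T cv sg B :: real and t :: "nat \<Rightarrow> real" and N :: nat and v v' v'' :: "real \<Rightarrow> real"
  assumes al: "0 < al" "al < 1" and mesh: "meshok t N" and N1: "N \<ge> 1" and tN: "t N \<le> T"
    and sg: "0 < sg" "sg < 2" "sg \<noteq> 1" and cv: "cv > 0"
    and vg: "vgood T cv sg v v' v''"
    and B1: "Qq cv sg t 1 \<le> B"
    and B2: "\<And>k. 1 \<le> k \<Longrightarrow> k \<le> N \<Longrightarrow> acoef al t k k * Qq cv sg t k \<le> B * omega (1 - al) (thalf t k)"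
    and B3: "\<And>k. 2 \<le> k \<Longrightarrow> k \<le> N \<Longrightarrow> acoef al t (k - 1) (k - 1) * Qq cv sg t k \<le> B * omega (1 - al) (thalf t (k - 1))"
    and n: "1 \<le> n" "n \<le> N"
  shows "(\<Sum>j=1..n. pker al t n j * \<bar>Rerr al t v j\<bar>) \<le> 9 * B"
proof (rule combine[where a = "acoef al t" and Q = "Qq cv sg t" and w = "\<lambda>k. omega (1 - al) (thalf t k)"])
  show "1 \<le> n" by (rule n(1))
  show "\<And>j. 1 \<le> j \<Longrightarrow> j \<le> n \<Longrightarrow> 0 \<le> pker al t n j" using pker_nonneg[OF al mesh] n by auto
  show "\<And>k. 1 \<le> k \<Longrightarrow> k \<le> n \<Longrightarrow> (\<Sum>j = k..n. pker al t n j * acoef al t j k) = 1" using pker_id[OF al mesh] n by auto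
  show "\<And>j k. 1 \<le> k \<Longrightarrow> k < j \<Longrightarrow> j \<le> n \<Longrightarrow> acoef al t j k \<le> acoef al t j (Suc k)" using acoef_mono[OF al mesh] n by auto
  show "\<And>k. 1 \<le> k \<Longrightarrow> k \<le> n \<Longrightarrow> 0 \<le> Qq cv sg t k" using Qq_nn[OF al mesh N1 tN sg cv vg] n by auto
  show "\<And>j. 1 \<le> j \<Longrightarrow> j \<le> n \<Longrightarrow> \<bar>Rerr al t v j\<bar> \<le> (\<Sum>k = 1..j - 1. 2 * (acoef al t j (Suc k) - (if 2 \<le> k then acoef al t j (k - 1) else 0)) * Qq cv sg t k) + 3 * acoef al t j j * Qq cv sg t j"
    using Rerr_bound[OF al mesh N1 tN sg cv vg] n by auto
  show "Qq cv sg t 1 \<le> B" by (rule B1)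
  show "\<And>k. 1 \<le> k \<Longrightarrow> k \<le> n \<Longrightarrow> acoef al t k k * Qq cv sg t k \<le> B * omega (1 - al) (thalf t k)" using B2 n by auto
  show "\<And>k. 2 \<le> k \<Longrightarrow> k \<le> n \<Longrightarrow> acoef al t (k - 1) (k - 1) * Qq cv sg t k \<le> B * omega (1 - al) (thalf t (k - 1))" using B3 n by auto
  show "\<And>k. 0 \<le> omega (1 - al) (thalf t k)" using omega_nonneg[OF al(2)] by auto
  show "(\<Sum>j = 1..n. pker al t n j * omega (1 - al) (thalf t j)) \<le> 1" using pker_omega_sum[OF al mesh n] .
qed


lemma Qq_bound_ge2:
  assumes cv: "cv > 0" and sg: "0 < sg" "sg < 2" "sg \<noteq> 1"
    and a: "0 < thalf t (k - 1)" "thalf t (k - 1) < thalf t k"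
  shows "Qq cv sg t k \<le> 2 * Ph2 cv sg (thalf t (k - 1)) * (hh t k)^2"
proof -
  define A where "A = thalf t (k - 1)"
  define Bb where "Bb = thalf t k"
  define h where "h = hh t k"
  have h: "h = Bb - A" "h > 0" using a unfolding h_def hh_def A_def Bb_def by auto
  obtain z where z: "A < z" "z < Bb" "Ph cv sg Bb - Ph cv sg A = (Bb - A) * Ph1 cv sg z"
    using MVT2[of A Bb "Ph cv sg" "Ph1 cv sg"] Ph_deriv[of sg _ cv] sg a unfolding A_def Bb_def by force
  have zz: "Ph cv sg Bb - Ph cv sg A = h * Ph1 cv sg z" using z(3) h(1) by simp
  have J: "Jq cv sg t k = h * (Ph1 cv sg Bb - Ph1 cv sg z)"
    unfolding Jq_def A_def[symmetric] Bb_def[symmetric] h_def[symmetric] using zz by (simp add: algebra_simps)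
  have "Ph1 cv sg Bb - Ph1 cv sg z \<le> Ph2 cv sg A * (Bb - z)"
    by (rule Ph1_mvt) (use cv sg a z in \<open>auto simp: A_def\<close>)
  also have "\<dots> \<le> Ph2 cv sg A * h" using z h Ph2_pos[OF cv, of sg A] by (auto intro!: mult_left_mono)
  finally have "h * (Ph1 cv sg Bb - Ph1 cv sg z) \<le> h * (Ph2 cv sg A * h)"
    using h(2) by (intro mult_left_mono) auto
  then have J2: "Jq cv sg t k \<le> Ph2 cv sg A * h^2"
    unfolding J by (simp add: power2_eq_square algebra_simps)
  have "Ph2 cv sg (A + h / 2) \<le> Ph2 cv sg A" by (rule Ph2_anti) (use cv sg a h in \<open>auto simp: A_def\<close>)
  then have "Ph2 cv sg (A + h / 2) * h^2 \<le> Ph2 cv sg A * h^2" by (simp add: mult_right_mono)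
  then show ?thesis using J2 unfolding Qq_def A_def[symmetric] h_def[symmetric] by simp
qed

lemma Qq_bound_1:
  assumes cv: "cv > 0" and sg: "0 < sg" "sg < 2" "sg \<noteq> 1"
    and t0: "thalf t 0 = 0" and h: "thalf t 1 > 0"
  shows "Qq cv sg t 1 \<le> cv * (2 * (thalf t 1)^2 + (1 / sg + 4) * thalf t 1 powr sg)"
proof -
  define h where "h = thalf t 1"
  have hh: "hh t 1 = h" unfolding hh_def h_def using t0 by simp
  have p1: "h * h powr (sg - 1) = h powr sg" using h unfolding h_def by (simp add: powr_diff)
  have p2: "(h / 2) powr (sg - 2) * h^2 = 2 powr (2 - sg) * h powr sg"
    using h unfolding h_def by (simp add: powr_divide powr_diff power2_eq_square powr_minus divide_simps)
  have d: "sg - 1 \<noteq> 0" "sg \<noteq> 0" using sg by auto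
  have "1 / (sg - 1) = sg / (sg * (sg - 1))" using d by simp
  then have "1 / (sg - 1) - 1 / (sg * (sg - 1)) = (sg - 1) / (sg * (sg - 1))" by (simp add: diff_divide_distrib)
  also have "\<dots> = 1 / sg" using d by simp
  finally have key: "1 / (sg - 1) - 1 / (sg * (sg - 1)) = 1 / sg" .
  have alg: "cv * (h * h + P / (sg - 1)) - cv * (h * h / 2 + P / (sg * (sg - 1))) = cv * (h * h / 2 + P / sg)" for P
  proof -
    have "P / (sg - 1) - P / (sg * (sg - 1)) = P * (1 / (sg - 1) - 1 / (sg * (sg - 1)))" by (simp add: right_diff_distrib)
    also have "\<dots> = P / sg" using key by simp
    finally show ?thesis by (simp add: algebra_simps)
  qed
  have e1: "h * Ph1 cv sg h = cv * (h * h + h powr sg / (sg - 1))"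
    unfolding Ph1_def using p1 by (simp add: algebra_simps)
  have e2: "Ph cv sg h = cv * (h * h / 2 + h powr sg / (sg * (sg - 1)))"
    unfolding Ph_def by (simp add: power2_eq_square)
  have e3: "Ph cv sg (thalf t (1 - 1)) = 0" using t0 sg by (simp add: Ph_def)
  have J: "Jq cv sg t 1 = cv * (h^2 / 2 + h powr sg / sg)"
    unfolding Jq_def hh h_def[symmetric] e3 using e1 e2 alg[of "h powr sg"]
    by (simp add: power2_eq_square)
  have P: "Ph2 cv sg (h / 2) * h^2 = cv * (h^2 + 2 powr (2 - sg) * h powr sg)"
    unfolding Ph2_def using p2 by (simp add: algebra_simps)
  have two: "2 powr (2 - sg) \<le> 4" using powr_mono[of "2 - sg" 2 2] sg by simp
  have Q: "Qq cv sg t 1 = cv * (h^2 / 2 + h powr sg / sg) + cv * (h^2 + 2 powr (2 - sg) * h powr sg)"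
    unfolding Qq_def J hh using t0 P by (simp add: h_def)
  have "2 powr (2 - sg) * h powr sg \<le> 4 * h powr sg" by (rule mult_right_mono[OF two]) simp
  then have "Qq cv sg t 1 \<le> cv * (h^2 / 2 + h powr sg / sg) + cv * (h^2 + 4 * h powr sg)"
    unfolding Q using cv by (intro add_left_mono mult_left_mono) auto
  also have "\<dots> \<le> cv * (2 * h^2 + (1 / sg + 4) * h powr sg)"
    using cv by (simp add: algebra_simps)
  finally show ?thesis unfolding h_def .
qed


lemma powr_diff_upper:
  fixes x y g :: real
  assumes "0 \<le> y" "y \<le> x" "g \<ge> 1"
  shows "x powr g - y powr g \<le> g * x powr (g - 1) * (x - y)"
proof (cases "y = x")
  case True then show ?thesis by simp
next
  case False
  then have yx: "y < x" using assms by simp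
  have c: "continuous_on {y..x} (\<lambda>z. z powr g)"
    by (rule continuous_on_powr') (use assms in \<open>auto intro: continuous_intros\<close>)
  have d: "\<And>z. y < z \<Longrightarrow> z < x \<Longrightarrow> (\<lambda>z. z powr g) differentiable (at z)"
    using has_real_derivative_powr assms real_differentiable_def by (metis le_less_trans)
  obtain l z where z: "y < z" "z < x" "((\<lambda>z. z powr g) has_real_derivative l) (at z)" "x powr g - y powr g = (x - y) * l"
    using MVT[OF yx c d] by blast
  have zpos: "z > 0" using z assms by linarith
  have "l = g * z powr (g - 1)" using DERIV_unique[OF z(3) has_real_derivative_powr[OF zpos]] .
  moreover have "z powr (g - 1) \<le> x powr (g - 1)" by (rule powr_mono2) (use assms z zpos in auto)
  ultimately have "l \<le> g * x powr (g - 1)" using assms by (simp add: mult_left_mono)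
  then show ?thesis using z(4) yx by (simp add: mult.commute mult_left_mono)
qed

lemma powr_diff_lower:
  fixes x y g :: real
  assumes "0 \<le> y" "y \<le> x" "g \<ge> 1"
  shows "x powr (g - 1) * (x - y) \<le> x powr g - y powr g"
proof (cases "x = 0")
  case True then show ?thesis using assms by simp
next
  case False
  then have x: "x > 0" using assms by simp
  have xg: "x powr g = x powr (g - 1) * x" using x by (simp add: powr_diff)
  have "y powr g \<le> x powr (g - 1) * y"
  proof (cases "y = 0")
    case True then show ?thesis by simp
  next
    case False
    then have y: "y > 0" using assms by simp
    have "y powr g = y powr (g - 1) * y" using y by (simp add: powr_diff)
    also have "\<dots> \<le> x powr (g - 1) * y" by (intro mult_right_mono powr_mono2) (use assms y in auto)
    finally show ?thesis .
  qed
  then show ?thesis using xg by (simp add: algebra_simps)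
qed

context
  fixes T g :: real and N :: nat
  assumes T: "T > 0" and g: "g \<ge> 1" and N: "N \<ge> 2"
begin

abbreviation "gm \<equiv> graded_mesh T g N"

lemma gm_eq: "gm k = T * (real k / real N) powr g" by (simp add: graded_mesh_def)

lemma gm_mesh: "meshok gm N"
  unfolding meshok_def
proof (intro conjI allI impI)
  show "gm 0 = 0" by (simp add: gm_eq)
  fix i assume "i < N"
  have "(real i / real N) powr g < (real (Suc i) / real N) powr g"
    by (rule powr_less_mono2) (use g N in \<open>auto simp: divide_strict_right_mono\<close>)
  then show "gm i < gm (Suc i)" using T by (simp add: gm_eq)
qed

lemma gm_N: "gm N = T" using N by (simp add: gm_eq)

lemma gm_nn: "gm k \<ge> 0" using T by (simp add: gm_eq)

lemma gm_mono: "i \<le> j \<Longrightarrow> gm i \<le> gm j"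
  using T g by (auto simp: gm_eq intro!: mult_left_mono powr_mono2 divide_right_mono)

lemma s_le: "1 \<le> k \<Longrightarrow> thalf gm k \<le> gm k"
  using gm_mono[of "k - 1" k] by (cases k) (auto simp: thalf_Suc)

lemma s_ge: "1 \<le> k \<Longrightarrow> gm k / 2 \<le> thalf gm k"
  using gm_nn[of "k - 1"] by (cases k) (auto simp: thalf_Suc)

lemma hh_ge2: "2 \<le> k \<Longrightarrow> hh gm k = (gm k - gm (k - 2)) / 2"
proof -
  assume "2 \<le> k"
  then obtain j where "k = Suc (Suc j)" by (metis add_2_eq_Suc le_Suc_ex)
  then show ?thesis by (simp add: hh_def thalf_Suc field_simps)
qed

lemma hh_1: "hh gm 1 = gm 1 / 2"
  by (simp add: hh_def thalf_0 gm_eq thalf_Suc[of _ 0, simplified])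

lemma hh_lower: "1 \<le> m \<Longrightarrow> (gm m - gm (m - 1)) / 2 \<le> hh gm m"
proof -
  assume m: "1 \<le> m"
  show ?thesis
  proof (cases "m = 1")
    case True then show ?thesis using hh_1 by (simp add: gm_eq)
  next
    case False
    then have "2 \<le> m" using m by simp
    then show ?thesis using hh_ge2[of m] gm_mono[of "m - 2" "m - 1"] by simp
  qed
qed

end


lemma powr_cancel: "(N::real) > 0 \<Longrightarrow> a + b = 0 \<Longrightarrow> N powr a * N powr b = 1"
  by (simp add: powr_add[symmetric])

lemma F_combine:
  fixes X N T g al b :: real
  assumes "X > 0" "N > 0" "T > 0"
  shows "(T * X powr (g - 1) / N) powr (2 - al) * (T * X powr g) powr b
       = T powr (2 - al + b) * X powr ((g - 1) * (2 - al) + g * b) * N powr (- (2 - al))"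
  using assms powr_cancel[of N "al - 2" "2 - al"] by (simp add: powr_mult powr_divide powr_powr powr_add powr_minus divide_simps)

lemma F_main:
  fixes X N al sg g :: real
  assumes X: "1 / N \<le> X" "X \<le> 1" and N: "N \<ge> 1" and al: "0 < al" "al < 1" and sg: "0 < sg" and g: "g \<ge> 1"
  shows "X powr ((g - 1) * (2 - al) + g * al) * N powr (- (2 - al)) \<le> N powr (- min (g * sg) (2 - al))"
    and "X powr ((g - 1) * (2 - al) + g * (sg - 2 + al)) * N powr (- (2 - al)) \<le> N powr (- min (g * sg) (2 - al))"
proof -
  have Xp: "X > 0" using X N by (smt (verit) divide_pos_pos)
  have Nr: "N powr (- (2 - al)) \<le> N powr (- min (g * sg) (2 - al))"
    by (rule powr_mono) (use N in auto)
  have "X powr ((g - 1) * (2 - al) + g * al) \<le> 1"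
    by (rule powr_le1) (use g al Xp X in auto)
  then show "X powr ((g - 1) * (2 - al) + g * al) * N powr (- (2 - al)) \<le> N powr (- min (g * sg) (2 - al))"
    using Nr by (meson mult_left_le_one_le order_trans powr_ge_zero)
  have e: "(g - 1) * (2 - al) + g * (sg - 2 + al) = g * sg - (2 - al)" by (simp add: algebra_simps)
  show "X powr ((g - 1) * (2 - al) + g * (sg - 2 + al)) * N powr (- (2 - al)) \<le> N powr (- min (g * sg) (2 - al))"
  proof (cases "g * sg \<ge> 2 - al")
    case True
    have "X powr (g * sg - (2 - al)) \<le> 1" by (rule powr_le1) (use True Xp X in auto)
    then show ?thesis unfolding e using Nr by (meson mult_left_le_one_le order_trans powr_ge_zero)
  next
    case False
    have "X powr (g * sg - (2 - al)) \<le> (1 / N) powr (g * sg - (2 - al))"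
      by (rule powr_mono2') (use False X N in auto)
    also have "\<dots> = N powr (- (g * sg - (2 - al)))" using N powr_cancel[of N "2 - al - g * sg" "g * sg - (2 - al)"] by (simp add: powr_divide powr_minus divide_simps)
    finally have "X powr (g * sg - (2 - al)) * N powr (- (2 - al)) \<le> N powr (- (g * sg - (2 - al))) * N powr (- (2 - al))"
      by (rule mult_right_mono) simp
    also have "\<dots> = N powr (- (g * sg))" by (simp add: powr_add[symmetric])
    also have "\<dots> = N powr (- min (g * sg) (2 - al))" using False by simp
    finally show ?thesis unfolding e .
  qed
qed


lemma est_k:
  fixes al sg g T cv N X h h' s s' :: real
  assumes al: "0 < al" "al < 1" and sg: "0 < sg" "sg < 2" and g: "g \<ge> 1" and T: "T > 0" and cv: "cv > 0"
    and N: "N \<ge> 1" and X: "1 / N \<le> X" "X \<le> 1"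
    and h: "0 < h" "h \<le> g * (T * X powr (g - 1) / N)"
    and h': "2 powr (- g) * (T * X powr (g - 1) / N) \<le> h'"
    and s: "0 < s" "s \<le> T * X powr g"
    and s': "2 powr (- g - 1) * (T * X powr g) \<le> s'" "s' \<le> T * X powr g"
  defines "D \<equiv> 2 * cv * 2 powr ((g + 1) * (2 - sg)) * g^2 * 2 powr g * (T powr 2 + T powr sg)"
  shows "2 * Ph2 cv sg s' * h powr (2 - al) * s powr al \<le> D * N powr (- min (g * sg) (2 - al))"
    and "2 * Ph2 cv sg s' * h^2 * s' powr al * h' powr (- al) \<le> D * N powr (- min (g * sg) (2 - al))"
proof -
  define U where "U = T * X powr (g - 1) / N"
  define V where "V = T * X powr g"
  define c2 where "c2 = 2 powr ((g + 1) * (2 - sg))"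
  define r where "r = min (g * sg) (2 - al)"
  have Xp: "X > 0" using X N by (smt (verit) divide_pos_pos)
  have Up: "U > 0" unfolding U_def using T Xp N by simp
  have Vp: "V > 0" unfolding V_def using T Xp by simp
  have c2: "c2 \<ge> 1" unfolding c2_def by (rule ge_one_powr_ge_zero) (use g sg in auto)
  have "0 < 2 powr (- g - 1) * (T * X powr g)" using Vp unfolding V_def by simp
  then have s'p: "s' > 0" using s'(1) by linarith
  have "s' powr (sg - 2) \<le> (2 powr (- g - 1) * V) powr (sg - 2)"
    by (rule powr_mono2') (use sg s' Vp in \<open>auto simp: V_def\<close>)
  also have "\<dots> = c2 * V powr (sg - 2)"
    unfolding c2_def by (simp add: powr_mult powr_powr algebra_simps)
  finally have sp: "s' powr (sg - 2) \<le> c2 * V powr (sg - 2)" .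
  have P1: "Ph2 cv sg s' \<le> cv * c2 * (1 + V powr (sg - 2))"
  proof -
    have "1 + s' powr (sg - 2) \<le> c2 * (1 + V powr (sg - 2))"
    proof -
      have "1 + s' powr (sg - 2) \<le> c2 + c2 * V powr (sg - 2)" using sp c2 by linarith
      then show ?thesis by (simp add: algebra_simps)
    qed
    then show ?thesis unfolding Ph2_def using cv by (simp add: mult.assoc mult_left_mono)
  qed
  have Ph2nn: "0 \<le> Ph2 cv sg s'" using Ph2_pos[OF cv] by (simp add: less_imp_le)
  have K1: "U powr (2 - al) * V powr al \<le> T powr 2 * N powr (- r)"
  proof -
    have "U powr (2 - al) * V powr al = T powr 2 * (X powr ((g - 1) * (2 - al) + g * al) * N powr (- (2 - al)))"
      unfolding U_def V_def using F_combine[OF Xp _ T, of N g al al] N by simp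
    also have "\<dots> \<le> T powr 2 * N powr (- r)"
      unfolding r_def by (rule mult_left_mono[OF F_main(1)[OF X N al sg(1) g]]) simp
    finally show ?thesis .
  qed
  have K2: "U powr (2 - al) * V powr (sg - 2 + al) \<le> T powr sg * N powr (- r)"
  proof -
    have "U powr (2 - al) * V powr (sg - 2 + al) = T powr (2 - al + (sg - 2 + al)) * (X powr ((g - 1) * (2 - al) + g * (sg - 2 + al)) * N powr (- (2 - al)))"
      unfolding U_def V_def using F_combine[OF Xp _ T, of N g al "sg - 2 + al"] N by simp
    also have "\<dots> = T powr sg * (X powr ((g - 1) * (2 - al) + g * (sg - 2 + al)) * N powr (- (2 - al)))" by simp
    also have "\<dots> \<le> T powr sg * N powr (- r)"
      unfolding r_def by (rule mult_left_mono[OF F_main(2)[OF X N al sg(1) g]]) simp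
    finally show ?thesis .
  qed
  have K: "(1 + V powr (sg - 2)) * (U powr (2 - al) * V powr al) \<le> (T powr 2 + T powr sg) * N powr (- r)"
  proof -
    have pa: "V powr (sg - 2) * V powr al = V powr (sg - 2 + al)" by (simp add: powr_add)
    have "(1 + V powr (sg - 2)) * (U powr (2 - al) * V powr al) = U powr (2 - al) * V powr al + U powr (2 - al) * (V powr (sg - 2) * V powr al)"
      by (simp add: algebra_simps)
    then have "(1 + V powr (sg - 2)) * (U powr (2 - al) * V powr al) = U powr (2 - al) * V powr al + U powr (2 - al) * V powr (sg - 2 + al)"
      by (simp only: pa)
    moreover have "(T powr 2 + T powr sg) * N powr (- r) = T powr 2 * N powr (- r) + T powr sg * N powr (- r)"
      by (rule distrib_right)
    ultimately show ?thesis using K1 K2 by linarith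
  qed
  have g2: "g powr (2 - al) \<le> g^2"
  proof -
    have "g powr (2 - al) \<le> g powr 2" by (rule powr_mono) (use g al in auto)
    moreover have "g powr 2 = g^2" using g by (subst powr_numeral) auto
    ultimately show ?thesis by simp
  qed
  have twog: "1 \<le> 2 powr g" by (rule ge_one_powr_ge_zero) (use g in auto)
  have Dform: "D = 2 * cv * c2 * g^2 * 2 powr g * (T powr 2 + T powr sg)" unfolding D_def c2_def by simp
  have hp: "h powr (2 - al) \<le> g^2 * U powr (2 - al)"
  proof -
    have "h powr (2 - al) \<le> (g * U) powr (2 - al)" by (rule powr_mono2) (use al h in \<open>auto simp: U_def\<close>)
    also have "\<dots> = g powr (2 - al) * U powr (2 - al)" by (simp add: powr_mult)
    also have "\<dots> \<le> g^2 * U powr (2 - al)" by (rule mult_right_mono[OF g2]) simp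
    finally show ?thesis .
  qed
  have sa: "s powr al \<le> V powr al" by (rule powr_mono2) (use al s in \<open>auto simp: V_def\<close>)
  have PC: "0 \<le> cv * c2 * (1 + V powr (sg - 2))" using cv c2 by simp
  have a1: "Ph2 cv sg s' * h powr (2 - al) \<le> (cv * c2 * (1 + V powr (sg - 2))) * (g^2 * U powr (2 - al))"
    by (rule mult_mono[OF P1 hp PC]) simp
  have a2: "Ph2 cv sg s' * h powr (2 - al) * s powr al \<le> (cv * c2 * (1 + V powr (sg - 2))) * (g^2 * U powr (2 - al)) * V powr al"
    by (rule mult_mono[OF a1 sa]) (use PC in simp_all)
  have "2 * Ph2 cv sg s' * h powr (2 - al) * s powr al \<le> 2 * (cv * c2 * (1 + V powr (sg - 2))) * (g^2 * U powr (2 - al)) * V powr al"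
    using a2 by (simp add: mult.assoc)
  also have "\<dots> = 2 * cv * c2 * g^2 * ((1 + V powr (sg - 2)) * (U powr (2 - al) * V powr al))" by (simp add: algebra_simps)
  also have "\<dots> \<le> 2 * cv * c2 * g^2 * ((T powr 2 + T powr sg) * N powr (- r))"
    by (rule mult_left_mono[OF K]) (use cv c2 in auto)
  also have "\<dots> \<le> 2 * cv * c2 * g^2 * 2 powr g * ((T powr 2 + T powr sg) * N powr (- r))"
  proof -
    have "0 \<le> 2 * cv * c2 * g^2 * ((T powr 2 + T powr sg) * N powr (- r))" using cv c2 by simp
    then have "1 * (2 * cv * c2 * g^2 * ((T powr 2 + T powr sg) * N powr (- r))) \<le> 2 powr g * (2 * cv * c2 * g^2 * ((T powr 2 + T powr sg) * N powr (- r)))"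
      by (rule mult_right_mono[OF twog])
    then show ?thesis by (simp add: algebra_simps)
  qed
  finally show "2 * Ph2 cv sg s' * h powr (2 - al) * s powr al \<le> D * N powr (- min (g * sg) (2 - al))"
    unfolding Dform r_def by (simp add: algebra_simps)
  have h2: "h^2 \<le> g^2 * U^2"
  proof -
    have "h^2 \<le> (g * U)^2" by (rule power_mono) (use h in \<open>auto simp: U_def\<close>)
    then show ?thesis by (simp add: power_mult_distrib)
  qed
  have s'a: "s' powr al \<le> V powr al" by (rule powr_mono2) (use al s' s'p in \<open>auto simp: V_def\<close>)
  have h'p: "h' powr (- al) \<le> 2 powr g * U powr (- al)"
  proof -
    have "h' powr (- al) \<le> (2 powr (- g) * U) powr (- al)"
    proof (rule powr_mono2')
      show "0 < 2 powr (- g) * U" using Up by simp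
    qed (use al h' in \<open>auto simp: U_def\<close>)
    also have "\<dots> = 2 powr (g * al) * U powr (- al)" by (simp add: powr_mult powr_powr)
    also have "\<dots> \<le> 2 powr g * U powr (- al)"
      by (rule mult_right_mono) (use al g in \<open>auto intro: powr_mono\<close>)
    finally show ?thesis .
  qed
  have UU: "U^2 * U powr (- al) = U powr (2 - al)"
  proof -
    have "U^2 = U powr 2" using Up by (subst powr_numeral) auto
    moreover have "U powr 2 * U powr (- al) = U powr (2 + - al)" by (rule powr_add[symmetric])
    ultimately show ?thesis by simp
  qed
  have b1: "Ph2 cv sg s' * h^2 \<le> (cv * c2 * (1 + V powr (sg - 2))) * (g^2 * U^2)"
    by (rule mult_mono[OF P1 h2 PC]) simp
  have b2: "Ph2 cv sg s' * h^2 * s' powr al \<le> (cv * c2 * (1 + V powr (sg - 2))) * (g^2 * U^2) * V powr al"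
    by (rule mult_mono[OF b1 s'a]) (use PC in simp_all)
  have b3: "Ph2 cv sg s' * h^2 * s' powr al * h' powr (- al) \<le> (cv * c2 * (1 + V powr (sg - 2))) * (g^2 * U^2) * V powr al * (2 powr g * U powr (- al))"
    by (rule mult_mono[OF b2 h'p]) (use PC in simp_all)
  have "2 * Ph2 cv sg s' * h^2 * s' powr al * h' powr (- al)
      \<le> 2 * (cv * c2 * (1 + V powr (sg - 2))) * (g^2 * U^2) * V powr al * (2 powr g * U powr (- al))"
    using b3 by (simp add: mult.assoc)
  also have "\<dots> = 2 * cv * c2 * g^2 * 2 powr g * ((1 + V powr (sg - 2)) * ((U^2 * U powr (- al)) * V powr al))"
    by (simp add: algebra_simps)
  also have "\<dots> = 2 * cv * c2 * g^2 * 2 powr g * ((1 + V powr (sg - 2)) * (U powr (2 - al) * V powr al))"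
    by (simp only: UU)
  also have "\<dots> \<le> 2 * cv * c2 * g^2 * 2 powr g * ((T powr 2 + T powr sg) * N powr (- r))"
    by (rule mult_left_mono[OF K]) (use cv c2 in auto)
  finally show "2 * Ph2 cv sg s' * h^2 * s' powr al * h' powr (- al) \<le> D * N powr (- min (g * sg) (2 - al))"
    unfolding Dform r_def by (simp add: algebra_simps)
qed


context
  fixes T g :: real and N :: nat
  assumes T: "T > 0" and g: "g \<ge> 1" and N: "N \<ge> 2"
begin

lemma mesh_bounds:
  assumes k: "2 \<le> k" "k \<le> N"
  defines "X \<equiv> real k / real N"
  shows "hh (graded_mesh T g N) k \<le> g * (T * X powr (g - 1) / N)"
    and "2 powr (- g) * (T * X powr (g - 1) / N) \<le> hh (graded_mesh T g N) (k - 1)"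
    and "thalf (graded_mesh T g N) k \<le> T * X powr g"
    and "2 powr (- g - 1) * (T * X powr g) \<le> thalf (graded_mesh T g N) (k - 1)"
    and "thalf (graded_mesh T g N) (k - 1) \<le> T * X powr g"
    and "1 / real N \<le> X" "X \<le> 1"
proof -
  define Y where "Y = real (k - 2) / real N"
  define Z where "Z = real (k - 1) / real N"
  have Np: "real N > 0" using N by simp
  have gmk: "graded_mesh T g N k = T * X powr g" "graded_mesh T g N (k - 2) = T * Y powr g" "graded_mesh T g N (k - 1) = T * Z powr g"
    by (simp_all add: gm_eq[OF T g N] X_def Y_def Z_def)
  have XY: "X - Y = 2 / N" unfolding X_def Y_def using k by (simp add: of_nat_diff diff_divide_distrib[symmetric])
  have ZY: "Z - Y = 1 / N" unfolding Z_def Y_def using k by (simp add: of_nat_diff diff_divide_distrib[symmetric])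
  have Y0: "0 \<le> Y" unfolding Y_def by simp
  have YX: "Y \<le> X" using XY Np by (smt (verit) divide_pos_pos)
  have YZ: "Y \<le> Z" using ZY Np by (smt (verit) divide_pos_pos)
  have Xp: "X > 0" unfolding X_def using k Np by simp
  have ZX: "X / 2 \<le> Z" unfolding Z_def X_def using k by (simp add: divide_simps)
  show "1 / real N \<le> X" unfolding X_def using k Np by (simp add: divide_right_mono)
  show "X \<le> 1" unfolding X_def using k Np by simp
  show "hh (graded_mesh T g N) k \<le> g * (T * X powr (g - 1) / N)"
  proof -
    have "hh (graded_mesh T g N) k = T * (X powr g - Y powr g) / 2"
      using hh_ge2[OF T g N k(1)] gmk by (simp add: algebra_simps)
    also have "\<dots> \<le> T * (g * X powr (g - 1) * (X - Y)) / 2"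
      using powr_diff_upper[OF Y0 YX g] T by (intro divide_right_mono mult_left_mono) auto
    also have "\<dots> = g * (T * X powr (g - 1) / N)" unfolding XY by simp
    finally show ?thesis .
  qed
  show "2 powr (- g) * (T * X powr (g - 1) / N) \<le> hh (graded_mesh T g N) (k - 1)"
  proof -
    have "(X / 2) powr (g - 1) \<le> Z powr (g - 1)" by (rule powr_mono2) (use g Xp ZX in auto)
    moreover have "(X / 2) powr (g - 1) = X powr (g - 1) * 2 powr (- g) * 2"
    proof -
      have a: "(X / 2) powr (g - 1) = X powr (g - 1) / 2 powr (g - 1)" by (rule powr_divide)
      have b: "2 powr (g - 1) = 2 powr g / 2" by (simp add: powr_diff)
      have c: "2 powr (- g) = 1 / 2 powr g" by (simp add: powr_minus divide_inverse)
      show ?thesis unfolding a b c by simp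
    qed
    ultimately have e: "X powr (g - 1) * 2 powr (- g) * 2 \<le> Z powr (g - 1)" by simp
    have "2 powr (- g) * (T * X powr (g - 1) / N) = T * (X powr (g - 1) * 2 powr (- g) * 2) * (1 / N) / 2"
      by (simp add: divide_simps)
    also have "\<dots> \<le> T * (Z powr (g - 1) * (Z - Y)) / 2"
    proof -
      have "T * (X powr (g - 1) * 2 powr (- g) * 2) \<le> T * Z powr (g - 1)" using e T by (intro mult_left_mono) auto
      then have "T * (X powr (g - 1) * 2 powr (- g) * 2) / N \<le> T * Z powr (g - 1) / N" using Np by (intro divide_right_mono) auto
      then have "T * (X powr (g - 1) * 2 powr (- g) * 2) / N / 2 \<le> T * Z powr (g - 1) / N / 2"
        by (rule divide_right_mono) simp
      then show ?thesis by (simp only: ZY times_divide_eq_right mult_1_right)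
    qed
    also have "\<dots> \<le> T * (Z powr g - Y powr g) / 2"
      using powr_diff_lower[OF Y0 YZ g] T by (intro divide_right_mono mult_left_mono) auto
    also have "\<dots> = (graded_mesh T g N (k - 1) - graded_mesh T g N (k - 1 - 1)) / 2"
    proof -
      have "k - 1 - 1 = k - 2" by simp
      then show ?thesis using gmk(2,3) by (simp add: algebra_simps)
    qed
    also have "\<dots> \<le> hh (graded_mesh T g N) (k - 1)" by (rule hh_lower[OF T g N]) (use k in auto)
    finally show ?thesis .
  qed
  show "thalf (graded_mesh T g N) k \<le> T * X powr g" using s_le[OF T g N, of k] gmk k by simp
  show "2 powr (- g - 1) * (T * X powr g) \<le> thalf (graded_mesh T g N) (k - 1)"
  proof -
    have "(X / 2) powr g \<le> Z powr g" by (rule powr_mono2) (use g Xp ZX in auto)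
    then have "X powr g * 2 powr (- g - 1) * 2 \<le> Z powr g"
      by (simp add: powr_divide powr_minus divide_simps powr_diff powr_add)
    then have "2 powr (- g - 1) * (T * X powr g) \<le> graded_mesh T g N (k - 1) / 2"
      using gmk T by (simp add: algebra_simps divide_simps)
    also have "\<dots> \<le> thalf (graded_mesh T g N) (k - 1)" by (rule s_ge[OF T g N]) (use k in auto)
    finally show ?thesis .
  qed
  show "thalf (graded_mesh T g N) (k - 1) \<le> T * X powr g"
  proof -
    have "1 \<le> k - 1" using k by simp
    then have "thalf (graded_mesh T g N) (k - 1) \<le> graded_mesh T g N (k - 1)" by (rule s_le[OF T g N])
    also have "\<dots> \<le> graded_mesh T g N k" by (rule gm_mono[OF T g N]) simp
    finally show ?thesis using gmk(1) by simp
  qed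
qed

end



lemma conv:
  assumes al: "0 < al" "al < 1" and y: "y > 0" and A: "A * y powr al \<le> (1 - al) * M"
  shows "A / Gamma (2 - al) \<le> M * omega (1 - al) y"
proof -
  have g: "Gamma (2 - al) = (1 - al) * Gamma (1 - al)" "Gamma (1 - al) > 0" using Gamma_2m Gamma_1m_pos al by auto
  have yy: "y powr al * y powr (- al) = 1" using y by (simp add: powr_minus)
  have "A = A * y powr al * y powr (- al)" using yy by (simp add: mult.assoc)
  also have "\<dots> \<le> (1 - al) * M * y powr (- al)" by (rule mult_right_mono[OF A]) simp
  finally have "A \<le> (1 - al) * M * y powr (- al)" .
  then have "A / ((1 - al) * Gamma (1 - al)) \<le> (1 - al) * M * y powr (- al) / ((1 - al) * Gamma (1 - al))"
    using g al by (intro divide_right_mono) auto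
  also have "\<dots> = M * (y powr (- al) / Gamma (1 - al))"
  proof -
    have "(1 - al) * M * y powr (- al) / ((1 - al) * Gamma (1 - al)) = ((1 - al) * (M * y powr (- al))) / ((1 - al) * Gamma (1 - al))"
      by (simp only: mult.assoc)
    also have "\<dots> = (M * y powr (- al)) / Gamma (1 - al)" using al by (intro mult_divide_mult_cancel_left) simp
    finally show ?thesis by simp
  qed
  finally show ?thesis using g y by (simp add: omega_def)
qed

theorem mainTheorem9:
  fixes al T g sigma cv :: real
  assumes "0 < al" and "al < 1" and "T > 0" and "g \<ge> 1" and "cv > 0"
    and "sigma \<in> {0<..<1} \<union> {1<..<2}"
  shows "\<exists>C>0. \<forall>N::nat. \<forall>v v' v'' :: real \<Rightarrow> real.
     N \<ge> 2 \<and> continuous_on {0..T} v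
     \<and> (\<forall>t\<in>{0<..T}. (v has_real_derivative v' t) (at t within {0<..T})
                    \<and> (v' has_real_derivative v'' t) (at t within {0<..T}))
     \<and> continuous_on {0<..T} v''
     \<and> (\<forall>t\<in>{0<..T}. \<bar>v'' t\<bar> \<le> cv * (1 + t powr (sigma - 2)))
     \<longrightarrow> (\<forall>n\<in>{1..N}.
          (\<Sum>j=1..n. pker al (graded_mesh T g N) n j * \<bar>Rerr al (graded_mesh T g N) v j\<bar>)
            \<le> C * real N powr (- min (g * sigma) (2 - al)))"
proof -
  note al = assms(1,2) and T = assms(3) and g = assms(4) and cv = assms(5)
  have sg: "0 < sigma" "sigma < 2" "sigma \<noteq> 1" using assms(6) by auto
  define D where "D = 2 * cv * 2 powr ((g + 1) * (2 - sigma)) * g^2 * 2 powr g * (T powr 2 + T powr sigma)"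
  define D1 where "D1 = cv * (2 + (1 / sigma + 4)) * (T powr 2 + T powr sigma)"
  define C0 where "C0 = (D + D1) / (1 - al)"
  have Dp: "D \<ge> 0" unfolding D_def using cv by simp
  have D1p: "D1 > 0" unfolding D1_def using cv sg T by (simp add: add_pos_pos)
  have C0p: "C0 > 0" unfolding C0_def using Dp D1p al by simp
  have C0e: "(1 - al) * C0 = D + D1" unfolding C0_def using al by simp
  have C0ge: "D1 \<le> C0"
  proof -
    have "D1 \<le> D + D1" using Dp by simp
    also have "\<dots> \<le> (D + D1) / (1 - al)" using Dp D1p al by (simp add: divide_simps)
    finally show ?thesis unfolding C0_def .
  qed
  show ?thesis
  proof (rule exI[of _ "9 * C0"], intro conjI allI impI ballI)
    show "9 * C0 > 0" using C0p by simp
    fix N :: nat and v v' v'' :: "real \<Rightarrow> real" and n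
    assume H: "2 \<le> N \<and> continuous_on {0..T} v
     \<and> (\<forall>t\<in>{0<..T}. (v has_real_derivative v' t) (at t within {0<..T})
                    \<and> (v' has_real_derivative v'' t) (at t within {0<..T}))
     \<and> continuous_on {0<..T} v''
     \<and> (\<forall>t\<in>{0<..T}. \<bar>v'' t\<bar> \<le> cv * (1 + t powr (sigma - 2)))"
    assume n: "n \<in> {1..N}"
    have N: "N \<ge> 2" using H by simp
    have vg: "vgood T cv sigma v v' v''" unfolding vgood_def using H by simp
    define t where "t = graded_mesh T g N"
    define r where "r = min (g * sigma) (2 - al)"
    define B where "B = C0 * real N powr (- r)"
    have Nr: "real N \<ge> 1" using N by simp
    have Nrp: "0 < real N powr (- r)" using Nr by simp
    have mesh: "meshok t N" unfolding t_def by (rule gm_mesh[OF T g N])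
    have N1: "N \<ge> 1" using N by simp
    have tN: "t N \<le> T" unfolding t_def using gm_N[OF T g N] by simp
    have t0: "thalf t 0 = 0" using mesh by (simp add: thalf_0 meshok_def)
    have spos: "thalf t k > 0" if "1 \<le> k" "k \<le> N" for k
      using thalf_strict[OF mesh, of 0 k] that t0 by simp
    define h1 where "h1 = thalf t 1"
    have h1e: "h1 = T * (1 / real N) powr g / 2"
      unfolding h1_def t_def using thalf_Suc[of "graded_mesh T g N" 0] by (simp add: gm_eq[OF T g N])
    have h1p: "h1 > 0" unfolding h1_def using spos[of 1] N by simp
    have h1le: "h1 \<le> T / real N"
    proof -
      have "(1 / real N) powr g \<le> 1 / real N" by (rule powr_le_one_le) (use Nr g in auto)
      then have "T * (1 / real N) powr g / 2 \<le> T * (1 / real N) / 2" using T by (intro divide_right_mono mult_left_mono) auto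
      also have "\<dots> \<le> T / real N" using T Nr by (simp add: divide_simps)
      finally show ?thesis unfolding h1e .
    qed
    have hsq: "h1^2 \<le> T powr 2 * real N powr (- r)"
    proof -
      have "h1^2 \<le> (T / real N)^2" by (rule power_mono[OF h1le]) (use h1p in simp)
      also have "\<dots> = T powr 2 * real N powr (- 2)" using T Nr by (simp add: powr_minus divide_simps power2_eq_square)
      also have "\<dots> \<le> T powr 2 * real N powr (- r)"
        by (rule mult_left_mono, rule powr_mono) (use Nr al in \<open>auto simp: r_def\<close>)
      finally show ?thesis .
    qed
    have hsg: "h1 powr sigma \<le> T powr sigma * real N powr (- r)"
    proof -
      have "h1 powr sigma \<le> (T * (1 / real N) powr g) powr sigma"
        by (rule powr_mono2) (use sg h1p h1e T in auto)
      also have "\<dots> = T powr sigma * real N powr (- (g * sigma))"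
        using Nr by (simp add: powr_mult powr_powr powr_divide powr_minus divide_simps)
      also have "\<dots> \<le> T powr sigma * real N powr (- r)"
        by (rule mult_left_mono, rule powr_mono) (use Nr in \<open>auto simp: r_def\<close>)
      finally show ?thesis .
    qed
    have Q1: "Qq cv sigma t 1 \<le> D1 * real N powr (- r)"
    proof -
      have "Qq cv sigma t 1 \<le> cv * (2 * h1^2 + (1 / sigma + 4) * h1 powr sigma)"
        unfolding h1_def by (rule Qq_bound_1[OF cv sg t0]) (use h1p h1_def in simp)
      also have "\<dots> \<le> cv * (2 * (T powr 2 * real N powr (- r)) + (1 / sigma + 4) * (T powr sigma * real N powr (- r)))"
        using hsq hsg sg cv by (intro mult_left_mono add_mono mult_left_mono) auto
      also have "\<dots> \<le> D1 * real N powr (- r)"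
      proof -
        have "2 * (T powr 2 * real N powr (- r)) + (1 / sigma + 4) * (T powr sigma * real N powr (- r))
              \<le> (2 + (1 / sigma + 4)) * (T powr 2 + T powr sigma) * real N powr (- r)"
          using sg Nrp by (simp add: algebra_simps add_nonneg_nonneg mult_nonneg_nonneg)
        then show ?thesis unfolding D1_def using cv by (simp add: mult.assoc mult_left_mono)
      qed
      finally show ?thesis .
    qed
    have "D1 * real N powr (- r) \<le> C0 * real N powr (- r)" by (rule mult_right_mono[OF C0ge]) (use Nrp in simp)
    then have B1: "Qq cv sigma t 1 \<le> B" unfolding B_def using Q1 by linarith
    have Nr_le: "D * real N powr (- r) \<le> (1 - al) * B"
    proof -
      have "D * real N powr (- r) \<le> (D + D1) * real N powr (- r)" using D1p Nrp by (intro mult_right_mono) auto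
      then show ?thesis unfolding B_def using C0e by (simp add: mult.assoc[symmetric])
    qed
    have D1_le: "D1 * real N powr (- r) \<le> (1 - al) * B"
    proof -
      have "D1 * real N powr (- r) \<le> (D + D1) * real N powr (- r)" using Dp Nrp by (intro mult_right_mono) auto
      then show ?thesis unfolding B_def using C0e by (simp add: mult.assoc[symmetric])
    qed
    have ann: "acoef al t k k = hh t k powr (- al) / Gamma (2 - al)" if "1 \<le> k" "k \<le> N" for k
      using acoef_nn[OF al mesh that] by (simp add: hh_def)
    have G2p: "Gamma (2 - al) > 0" using Gamma_2m_pos al by simp
    have hhp: "hh t k > 0" if "1 \<le> k" "k \<le> N" for k
      using hh_pos[OF al mesh N1 tN sg cv vg that] .
    have big: "2 * Ph2 cv sigma (thalf t (k - 1)) * hh t k powr (2 - al) * thalf t k powr al \<le> D * real N powr (- r)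
      \<and> 2 * Ph2 cv sigma (thalf t (k - 1)) * (hh t k)^2 * thalf t (k - 1) powr al * hh t (k - 1) powr (- al) \<le> D * real N powr (- r)"
      if k: "2 \<le> k" "k \<le> N" for k
    proof -
      note mb = mesh_bounds[OF T g N k]
      have "2 * Ph2 cv sigma (thalf t (k - 1)) * hh t k powr (2 - al) * thalf t k powr al \<le> D * real N powr (- r)"
        unfolding D_def r_def t_def
        by (rule est_k(1)[OF al sg(1,2) g T cv Nr mb(6,7) _ mb(1) mb(2) _ mb(3) mb(4) mb(5)])
           (use hhp[of k] spos[of k] k in \<open>auto simp: t_def\<close>)
      moreover have "2 * Ph2 cv sigma (thalf t (k - 1)) * (hh t k)^2 * thalf t (k - 1) powr al * hh t (k - 1) powr (- al) \<le> D * real N powr (- r)"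
        unfolding D_def r_def t_def
        by (rule est_k(2)[OF al sg(1,2) g T cv Nr mb(6,7) _ mb(1) mb(2) _ mb(3) mb(4) mb(5)])
           (use hhp[of k] spos[of k] k in \<open>auto simp: t_def\<close>)
      ultimately show ?thesis by blast
    qed
    have Qk: "Qq cv sigma t k \<le> 2 * Ph2 cv sigma (thalf t (k - 1)) * (hh t k)^2" if k: "2 \<le> k" "k \<le> N" for k
      by (rule Qq_bound_ge2[OF cv sg]) (use spos[of "k - 1"] thalf_strict[OF mesh, of "k - 1" k] k in auto)
    have Phnn: "0 \<le> Ph2 cv sigma x" for x using Ph2_pos[OF cv] by (simp add: less_imp_le)
    have B2: "acoef al t k k * Qq cv sigma t k \<le> B * omega (1 - al) (thalf t k)" if k: "1 \<le> k" "k \<le> N" for k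
    proof (cases "k = 1")
      case True
      have hh1: "hh t 1 = h1" unfolding hh_def h1_def using t0 by simp
      have "acoef al t 1 1 * Qq cv sigma t 1 = (h1 powr (- al) * Qq cv sigma t 1) / Gamma (2 - al)"
        using ann[of 1] N hh1 by simp
      also have "\<dots> \<le> B * omega (1 - al) h1"
      proof (rule conv[OF al h1p])
        have pp: "h1 powr (- al) * h1 powr al = 1" using h1p by (simp add: powr_add[symmetric])
        have eq: "h1 powr (- al) * Qq cv sigma t 1 * h1 powr al = Qq cv sigma t 1 * (h1 powr (- al) * h1 powr al)"
          by (simp add: algebra_simps)
        have eq2: "h1 powr (- al) * Qq cv sigma t 1 * h1 powr al = Qq cv sigma t 1" unfolding eq pp by simp
        show "h1 powr (- al) * Qq cv sigma t 1 * h1 powr al \<le> (1 - al) * B" using eq2 Q1 D1_le by linarith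
      qed
      finally show ?thesis using True h1_def by simp
    next
      case False
      then have k2: "2 \<le> k" using k by simp
      have hp: "hh t k > 0" using hhp k by simp
      have e: "hh t k powr (- al) * (hh t k)^2 = hh t k powr (2 - al)"
      proof -
        have "(hh t k)^2 = hh t k powr 2" using hp by simp
        then show ?thesis by (simp add: powr_add[symmetric])
      qed
      have "acoef al t k k * Qq cv sigma t k \<le> hh t k powr (- al) / Gamma (2 - al) * (2 * Ph2 cv sigma (thalf t (k - 1)) * (hh t k)^2)"
        unfolding ann[OF k] by (rule mult_left_mono[OF Qk[OF k2 k(2)]]) (use G2p in simp)
      also have "\<dots> = (2 * Ph2 cv sigma (thalf t (k - 1)) * hh t k powr (2 - al)) / Gamma (2 - al)"
        using e by (simp add: algebra_simps)
      also have "\<dots> \<le> B * omega (1 - al) (thalf t k)"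
        by (rule conv[OF al spos[OF k]]) (use big[OF k2 k(2)] Nr_le in linarith)
      finally show ?thesis .
    qed
    have B3: "acoef al t (k - 1) (k - 1) * Qq cv sigma t k \<le> B * omega (1 - al) (thalf t (k - 1))" if k: "2 \<le> k" "k \<le> N" for k
    proof -
      have k1: "1 \<le> k - 1" "k - 1 \<le> N" using k by auto
      have "acoef al t (k - 1) (k - 1) * Qq cv sigma t k \<le> hh t (k - 1) powr (- al) / Gamma (2 - al) * (2 * Ph2 cv sigma (thalf t (k - 1)) * (hh t k)^2)"
        unfolding ann[OF k1] by (rule mult_left_mono[OF Qk[OF k]]) (use G2p in simp)
      also have "\<dots> = (2 * Ph2 cv sigma (thalf t (k - 1)) * (hh t k)^2 * hh t (k - 1) powr (- al)) / Gamma (2 - al)"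
        by (simp add: algebra_simps)
      also have "\<dots> \<le> B * omega (1 - al) (thalf t (k - 1))"
      proof (rule conv[OF al spos[OF k1]])
        have "2 * Ph2 cv sigma (thalf t (k - 1)) * (hh t k)^2 * hh t (k - 1) powr (- al) * thalf t (k - 1) powr al
            = 2 * Ph2 cv sigma (thalf t (k - 1)) * (hh t k)^2 * thalf t (k - 1) powr al * hh t (k - 1) powr (- al)"
          by (simp add: algebra_simps)
        then show "2 * Ph2 cv sigma (thalf t (k - 1)) * (hh t k)^2 * hh t (k - 1) powr (- al) * thalf t (k - 1) powr al \<le> (1 - al) * B"
          using big[OF k] Nr_le by linarith
      qed
      finally show ?thesis .
    qed
    have "(\<Sum>j=1..n. pker al t n j * \<bar>Rerr al t v j\<bar>) \<le> 9 * B"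
      by (rule general_bound[OF al mesh N1 tN sg cv vg B1 B2 B3]) (use n in auto)
    then show "(\<Sum>j=1..n. pker al (graded_mesh T g N) n j * \<bar>Rerr al (graded_mesh T g N) v j\<bar>)
            \<le> 9 * C0 * real N powr (- min (g * sigma) (2 - al))"
      unfolding t_def B_def r_def by (simp add: mult.assoc)
  qed
qed

end
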